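(* For a bigraph $X$, the map $C(X^{K_2})\to C(X^L)$ induced by the canonical inclusion $X^{K_2}=X^{L_{0,1}}\to X^L$ is a homotopy equivalence.
   Context: A graph is a set $V$ with a symmetric relation $E\subset V\times V$ (loops allowed). $K_2$ has vertices $0,1$ and edges $(0,1),(1,0)$. A bigraph is a graph $X$ with a graph homomorphism $\varepsilon_X:X\to K_2$; $V_i(X)=\varepsilon_X^{-1}(i)$. For integers $a\le b$, $L_{a,b}$ is the bigraph with vertices $\{a,\dots,b\}$, edges $\{(s,t):|s-t|=1\}$ and coloring $s\mapsto s\bmod 2$; so $L_{0,1}=K_2$. For bigraphs $X,Y$, $Y^X$ is the graph whose vertices are maps $h:V(X)\to V(Y)$ with $\varepsilon_Y\circ h=\varepsilon_X$, with $h,h'$ adjacent iff $(h(s),h'(t))\in E(Y)$ for all $(s,t)\in E(X)$. Let $r_n:L_{-n-1,n+2}\to L_{-n,n+1}$ be the retraction which is the identity on $L_{-n,n+1}$ and sends $-n-1\mapsto -n+1$, $n+2\mapsto n$. $X^L$ is the colimit (in graphs) of the sequence $X^{L_{0,1}}\xrightarrow{r_0^*}X^{L_{-1,2}}\xrightarrow{r_1^*}\cdots\xrightarrow{}X^{L_{-n,n+1}}\xrightarrow{r_n^*}\cdots$, where $r_n^*(h)=h\circ r_n$. For a graph $G$, $C(G)$ is the poset of finite nonempty $\sigma\subset V(G)$ with $\sigma\times\sigma\subset E(G)$, ordered by inclusion; a graph homomorphism $h$ induces $\sigma\mapsto h(\sigma)$. Posets are regarded as spaces via geometric realizations of order complexes.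 *)

theory Defs
  imports "HOL-Analysis.Analysis"
begin

definition is_graph :: "'a set \<Rightarrow> ('a \<times> 'a) set \<Rightarrow> bool" where
  "is_graph V E \<longleftrightarrow> E \<subseteq> V \<times> V \<and> sym E"

definition is_bigraph :: "'a set \<Rightarrow> ('a \<times> 'a) set \<Rightarrow> ('a \<Rightarrow> int) \<Rightarrow> bool" where
  "is_bigraph V E eps \<longleftrightarrow> is_graph V E \<and> eps ` V \<subseteq> {0,1}
     \<and> (\<forall>(x,y)\<in>E. (eps x, eps y) \<in> {(0,1),(1,0)})"

definition hom_verts :: "'b set \<Rightarrow> ('b \<Rightarrow> int) \<Rightarrow> 'a set \<Rightarrow> ('a \<Rightarrow> int) \<Rightarrow> ('b \<Rightarrow> 'a) set" where
  "hom_verts VX epsX VY epsY =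
     {h. h \<in> extensional VX \<and> h ` VX \<subseteq> VY \<and> (\<forall>s\<in>VX. epsY (h s) = epsX s)}"

definition hom_edges :: "'b set \<Rightarrow> ('b \<times> 'b) set \<Rightarrow> ('b \<Rightarrow> int) \<Rightarrow>
    'a set \<Rightarrow> ('a \<times> 'a) set \<Rightarrow> ('a \<Rightarrow> int) \<Rightarrow> (('b \<Rightarrow> 'a) \<times> ('b \<Rightarrow> 'a)) set" where
  "hom_edges VX EdX epsX VY EdY epsY =
     {(h,h'). h \<in> hom_verts VX epsX VY epsY \<and> h' \<in> hom_verts VX epsX VY epsY
        \<and> (\<forall>(s,t)\<in>EdX. (h s, h' t) \<in> EdY)}"

definition L_verts :: "int \<Rightarrow> int \<Rightarrow> int set" where
  "L_verts a b = {a..b}"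

definition L_edges :: "int \<Rightarrow> int \<Rightarrow> (int \<times> int) set" where
  "L_edges a b = {(s,t). s \<in> {a..b} \<and> t \<in> {a..b} \<and> \<bar>s - t\<bar> = 1}"

definition L_eps :: "int \<Rightarrow> int" where
  "L_eps s = s mod 2"

definition XLn_verts :: "'a set \<Rightarrow> ('a \<Rightarrow> int) \<Rightarrow> nat \<Rightarrow> (int \<Rightarrow> 'a) set" where
  "XLn_verts V eps n = hom_verts (L_verts (- int n) (int n + 1)) L_eps V eps"

definition XLn_edges :: "'a set \<Rightarrow> ('a \<times> 'a) set \<Rightarrow> ('a \<Rightarrow> int) \<Rightarrow> nat \<Rightarrow> ((int \<Rightarrow> 'a) \<times> (int \<Rightarrow> 'a)) set" where
  "XLn_edges V E eps n =
     hom_edges (L_verts (- int n) (int n + 1)) (L_edges (- int n) (int n + 1)) L_eps V E eps"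

definition retr :: "nat \<Rightarrow> int \<Rightarrow> int" where
  "retr n s = (if s = - int n - 1 then - int n + 1 else if s = int n + 2 then int n else s)"

definition retr_star :: "nat \<Rightarrow> (int \<Rightarrow> 'a) \<Rightarrow> (int \<Rightarrow> 'a)" where
  "retr_star n h = restrict (h \<circ> retr n) (L_verts (- int n - 1) (int n + 2))"

fun lift :: "nat \<Rightarrow> nat \<Rightarrow> (int \<Rightarrow> 'a) \<Rightarrow> (int \<Rightarrow> 'a)" where
  "lift n 0 h = h"
| "lift n (Suc d) h = retr_star (n + d) (lift n d h)"

text \<open>Vertices: the colimit of the vertex sets, i.e. the disjoint union of the stages
  modulo the relation identifying elements that become equal at some later stage.
  Edges: the images of the edges of the stages (the smallest relation making the
  cocone maps homomorphisms).\<close>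

definition XL_rel :: "'a set \<Rightarrow> ('a \<Rightarrow> int) \<Rightarrow> ((nat \<times> (int \<Rightarrow> 'a)) \<times> (nat \<times> (int \<Rightarrow> 'a))) set" where
  "XL_rel V eps = {((n,h),(m,h')). h \<in> XLn_verts V eps n \<and> h' \<in> XLn_verts V eps m
      \<and> (\<exists>k. n \<le> k \<and> m \<le> k \<and> lift n (k - n) h = lift m (k - m) h')}"

definition XL_verts :: "'a set \<Rightarrow> ('a \<Rightarrow> int) \<Rightarrow> (nat \<times> (int \<Rightarrow> 'a)) set set" where
  "XL_verts V eps = (SIGMA n:UNIV. XLn_verts V eps n) // XL_rel V eps"

definition XL_edges :: "'a set \<Rightarrow> ('a \<times> 'a) set \<Rightarrow> ('a \<Rightarrow> int) \<Rightarrow>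
    ((nat \<times> (int \<Rightarrow> 'a)) set \<times> (nat \<times> (int \<Rightarrow> 'a)) set) set" where
  "XL_edges V E eps = {(A,B). A \<in> XL_verts V eps \<and> B \<in> XL_verts V eps \<and>
      (\<exists>n h h'. (n,h) \<in> A \<and> (n,h') \<in> B \<and> (h,h') \<in> XLn_edges V E eps n)}"

definition XL_incl :: "'a set \<Rightarrow> ('a \<Rightarrow> int) \<Rightarrow> (int \<Rightarrow> 'a) \<Rightarrow> (nat \<times> (int \<Rightarrow> 'a)) set" where
  "XL_incl V eps h = XL_rel V eps `` {(0, h)}"

definition cliques :: "'a set \<Rightarrow> ('a \<times> 'a) set \<Rightarrow> 'a set set" where
  "cliques V E = {\<sigma>. finite \<sigma> \<and> \<sigma> \<noteq> {} \<and> \<sigma> \<subseteq> V \<and> \<sigma> \<times> \<sigma> \<subseteq> E}"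

definition order_complex :: "'p set \<Rightarrow> ('p \<Rightarrow> 'p \<Rightarrow> bool) \<Rightarrow> 'p set set" where
  "order_complex P le = {S. finite S \<and> S \<noteq> {} \<and> S \<subseteq> P \<and> (\<forall>x\<in>S. \<forall>y\<in>S. le x y \<or> le y x)}"

definition simplex_pts :: "'v set \<Rightarrow> ('v \<Rightarrow> real) set" where
  "simplex_pts S = {t. (\<forall>v. 0 \<le> t v) \<and> (\<forall>v. v \<notin> S \<longrightarrow> t v = 0) \<and> sum t S = 1}"

definition geom_real :: "'v set set \<Rightarrow> ('v \<Rightarrow> real) topology" where
  "geom_real K = topology (\<lambda>U. U \<subseteq> (\<Union>S\<in>K. simplex_pts S) \<and>
      (\<forall>S\<in>K. openin (subtopology (powertop_real UNIV) (simplex_pts S)) (U \<inter> simplex_pts S)))"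

definition poset_real :: "'p set \<Rightarrow> ('p \<Rightarrow> 'p \<Rightarrow> bool) \<Rightarrow> ('p \<Rightarrow> real) topology" where
  "poset_real P le = geom_real (order_complex P le)"

definition real_map :: "('p \<Rightarrow> 'q) \<Rightarrow> ('p \<Rightarrow> real) \<Rightarrow> ('q \<Rightarrow> real)" where
  "real_map \<phi> t = (\<lambda>q. sum t {p. t p \<noteq> 0 \<and> \<phi> p = q})"

definition homotopy_equivalence_map :: "'a topology \<Rightarrow> 'b topology \<Rightarrow> ('a \<Rightarrow> 'b) \<Rightarrow> bool" where
  "homotopy_equivalence_map X Y f \<longleftrightarrow> continuous_map X Y f \<and>
     (\<exists>g. continuous_map Y X g \<and>
          homotopic_with (\<lambda>x. True) X X (g \<circ> f) id \<and>
          homotopic_with (\<lambda>x. True) Y Y (f \<circ> g) id)"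

end

theory Submission
  imports Defs
begin

lemma geom_real_istop:
  fixes K :: "'v set set"
  shows "istopology (\<lambda>U. U \<subseteq> (\<Union>S\<in>K. simplex_pts S) \<and>
      (\<forall>S\<in>K. openin (subtopology (powertop_real UNIV) (simplex_pts S)) (U \<inter> simplex_pts S)))"
  unfolding istopology_def
proof (intro conjI allI impI ballI)
  fix U V :: "('v \<Rightarrow> real) set"
  assume u: "U \<subseteq> (\<Union>S\<in>K. simplex_pts S) \<and> (\<forall>S\<in>K. openin (subtopology (powertop_real UNIV) (simplex_pts S)) (U \<inter> simplex_pts S))"
    and v: "V \<subseteq> (\<Union>S\<in>K. simplex_pts S) \<and> (\<forall>S\<in>K. openin (subtopology (powertop_real UNIV) (simplex_pts S)) (V \<inter> simplex_pts S))"
  show "U \<inter> V \<subseteq> (\<Union>S\<in>K. simplex_pts S)" using u by blast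
  fix S assume "S \<in> K"
  then have "openin (subtopology (powertop_real UNIV) (simplex_pts S)) ((U \<inter> simplex_pts S) \<inter> (V \<inter> simplex_pts S))"
    using u v by (meson openin_Int)
  then show "openin (subtopology (powertop_real UNIV) (simplex_pts S)) (U \<inter> V \<inter> simplex_pts S)"
    by (simp add: Int_ac)
next
  fix \<K> :: "('v \<Rightarrow> real) set set"
  assume k: "\<forall>U\<in>\<K>. U \<subseteq> (\<Union>S\<in>K. simplex_pts S) \<and> (\<forall>S\<in>K. openin (subtopology (powertop_real UNIV) (simplex_pts S)) (U \<inter> simplex_pts S))"
  show "\<Union>\<K> \<subseteq> (\<Union>S\<in>K. simplex_pts S)" using k by blast
  fix S assume S: "S \<in> K"
  have "openin (subtopology (powertop_real UNIV) (simplex_pts S)) (\<Union>U\<in>\<K>. U \<inter> simplex_pts S)"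
  proof (rule openin_Union)
    fix W assume "W \<in> (\<lambda>U. U \<inter> simplex_pts S) ` \<K>"
    then show "openin (subtopology (powertop_real UNIV) (simplex_pts S)) W" using k S by blast
  qed
  then show "openin (subtopology (powertop_real UNIV) (simplex_pts S)) (\<Union>\<K> \<inter> simplex_pts S)"
    by (simp only: Int_Union2)
qed

lemma openin_geom_real:
  "openin (geom_real K) U \<longleftrightarrow> U \<subseteq> (\<Union>S\<in>K. simplex_pts S) \<and>
      (\<forall>S\<in>K. openin (subtopology (powertop_real UNIV) (simplex_pts S)) (U \<inter> simplex_pts S))"
  unfolding geom_real_def by (simp only: topology_inverse'[OF geom_real_istop])

lemma topspace_geom_real: "topspace (geom_real K) = (\<Union>S\<in>K. simplex_pts S)"
proof -
  have "openin (geom_real K) (\<Union>S\<in>K. simplex_pts S)"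
    unfolding openin_geom_real
  proof (intro conjI ballI)
    fix S assume "S \<in> K"
    then have "(\<Union>S\<in>K. simplex_pts S) \<inter> simplex_pts S = topspace (subtopology (powertop_real UNIV) (simplex_pts S))"
      by auto
    then show "openin (subtopology (powertop_real UNIV) (simplex_pts S)) ((\<Union>S\<in>K. simplex_pts S) \<inter> simplex_pts S)"
      by (metis openin_topspace)
  qed auto
  then have "(\<Union>S\<in>K. simplex_pts S) \<subseteq> topspace (geom_real K)"
    by (rule openin_subset)
  moreover have "topspace (geom_real K) \<subseteq> (\<Union>S\<in>K. simplex_pts S)"
    using openin_topspace[of "geom_real K"] unfolding openin_geom_real by blast
  ultimately show ?thesis by blast
qed

lemma cont_from_geom:
  assumes "\<And>S. S \<in> K \<Longrightarrow> continuous_map (subtopology (powertop_real UNIV) (simplex_pts S)) Y f"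
  shows "continuous_map (geom_real K) Y f"
  unfolding continuous_map_def
proof (intro conjI allI impI)
  show "f \<in> topspace (geom_real K) \<rightarrow> topspace Y"
    using assms unfolding topspace_geom_real continuous_map_def by auto
  fix U assume U: "openin Y U"
  show "openin (geom_real K) {x \<in> topspace (geom_real K). f x \<in> U}"
    unfolding openin_geom_real topspace_geom_real
  proof (intro conjI ballI)
    fix S assume S: "S \<in> K"
    have "{x \<in> topspace (subtopology (powertop_real UNIV) (simplex_pts S)). f x \<in> U}
        = {x \<in> \<Union> (simplex_pts ` K). f x \<in> U} \<inter> simplex_pts S"
      using S by auto
    then show "openin (subtopology (powertop_real UNIV) (simplex_pts S)) ({x \<in> \<Union> (simplex_pts ` K). f x \<in> U} \<inter> simplex_pts S)"
      using openin_continuous_map_preimage[OF assms[OF S] U] by simp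
  qed auto
qed

lemma cont_simplex_incl:
  assumes "S \<in> K"
  shows "continuous_map (subtopology (powertop_real UNIV) (simplex_pts S)) (geom_real K) id"
  unfolding continuous_map_def
proof (intro conjI allI impI)
  show "id \<in> topspace (subtopology (powertop_real UNIV) (simplex_pts S)) \<rightarrow> topspace (geom_real K)"
    using assms by (auto simp: topspace_geom_real)
  fix U assume "openin (geom_real K) U"
  then have "openin (subtopology (powertop_real UNIV) (simplex_pts S)) (U \<inter> simplex_pts S)"
    using assms by (auto simp: openin_geom_real)
  moreover have "{x \<in> topspace (subtopology (powertop_real UNIV) (simplex_pts S)). id x \<in> U} = U \<inter> simplex_pts S"
    by auto
  ultimately show "openin (subtopology (powertop_real UNIV) (simplex_pts S))
          {x \<in> topspace (subtopology (powertop_real UNIV) (simplex_pts S)). id x \<in> U}" by simp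
qed


lemma simplex_closed:
  fixes S :: "'v set"
  assumes "finite S"
  shows "closedin (powertop_real UNIV) (simplex_pts S)"
proof -
  have c1: "closedin (powertop_real UNIV) {t. 0 \<le> t v}" for v :: 'v
    using closedin_continuous_map_preimage[OF continuous_map_product_projection[of v UNIV "\<lambda>_. euclideanreal"], of "{0..}"]
    by simp
  have c2: "closedin (powertop_real UNIV) {t. t v \<in> {0}}" for v :: 'v
    using closedin_continuous_map_preimage[OF continuous_map_product_projection[of v UNIV "\<lambda>_. euclideanreal"], of "{0}"]
    by simp
  have cs: "continuous_map (powertop_real UNIV) euclideanreal (\<lambda>t. sum t S)"
    using assms by (intro continuous_map_sum continuous_map_product_projection) auto
  have c3: "closedin (powertop_real UNIV) {t. sum t S \<in> {1}}"
    using closedin_continuous_map_preimage[OF cs, of "{1}"] by simp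
  define D where "D v = (if v \<in> S then UNIV else {t::'v\<Rightarrow>real. t v \<in> {0}})" for v
  have c4: "closedin (powertop_real UNIV) (D v)" for v
    using c2 closedin_topspace[of "powertop_real (UNIV::'v set)"] by (simp add: D_def)
  have eq: "simplex_pts S = (\<Inter>v. {t. 0 \<le> t v} \<inter> D v) \<inter> {t. sum t S \<in> {1}}"
    unfolding simplex_pts_def D_def by (auto split: if_splits)
  have "closedin (powertop_real UNIV) (\<Inter>v. {t. 0 \<le> t v} \<inter> D v)"
    by (rule closedin_Inter) (auto intro!: closedin_Int c1 c4)
  then show ?thesis unfolding eq
    by (intro closedin_Int c3)
qed

lemma cont_into_geom:
  assumes f: "continuous_map Z (powertop_real UNIV) f" and fin: "finite \<T>" and TK: "\<T> \<subseteq> K"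
    and finT: "\<And>T. T \<in> \<T> \<Longrightarrow> finite T"
    and im: "\<And>z. z \<in> topspace Z \<Longrightarrow> f z \<in> (\<Union>T\<in>\<T>. simplex_pts T)"
  shows "continuous_map Z (geom_real K) f"
  unfolding continuous_map_def
proof (intro conjI allI impI)
  show "f \<in> topspace Z \<rightarrow> topspace (geom_real K)"
    using im TK unfolding topspace_geom_real by blast
  fix U assume U: "openin (geom_real K) U"
  define C where "C = (\<Union>T\<in>\<T>. simplex_pts T - U)"
  have cl: "closedin (powertop_real UNIV) (simplex_pts T - U)" if T: "T \<in> \<T>" for T
  proof -
    have "openin (subtopology (powertop_real UNIV) (simplex_pts T)) (U \<inter> simplex_pts T)"
      using U T TK unfolding openin_geom_real by blast
    then have "closedin (subtopology (powertop_real UNIV) (simplex_pts T)) (simplex_pts T - (U \<inter> simplex_pts T))"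
      using closedin_diff[OF closedin_topspace, of "subtopology (powertop_real UNIV) (simplex_pts T)"]
      by simp
    moreover have "simplex_pts T - (U \<inter> simplex_pts T) = simplex_pts T - U" by blast
    ultimately have "closedin (subtopology (powertop_real UNIV) (simplex_pts T)) (simplex_pts T - U)"
      by simp
    then show ?thesis using closedin_trans_full simplex_closed finT T by blast
  qed
  have "closedin (powertop_real UNIV) C"
    unfolding C_def using fin cl by (intro closedin_Union) auto
  then have "openin (powertop_real UNIV) (UNIV - C)"
    using openin_diff[OF openin_topspace[of "powertop_real UNIV"]] by simp
  then have "openin Z {z \<in> topspace Z. f z \<in> UNIV - C}"
    by (rule openin_continuous_map_preimage[OF f])
  moreover have "{z \<in> topspace Z. f z \<in> UNIV - C} = {z \<in> topspace Z. f z \<in> U}"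
    using im unfolding C_def by blast
  ultimately show "openin Z {z \<in> topspace Z. f z \<in> U}" by simp
qed


lemma quotient_sum_geom:
  "quotient_map (sum_topology (\<lambda>S. subtopology (powertop_real UNIV) (simplex_pts S)) K) (geom_real K) snd"
  unfolding quotient_map_def
proof (intro conjI allI impI)
  show "snd ` topspace (sum_topology (\<lambda>S. subtopology (powertop_real UNIV) (simplex_pts S)) K) = topspace (geom_real K)"
    unfolding topspace_geom_real topspace_sum_topology by force
  fix U :: "('a \<Rightarrow> real) set" assume U: "U \<subseteq> topspace (geom_real K)"
  have eq: "{x. (S, x) \<in> {x \<in> topspace (sum_topology (\<lambda>S. subtopology (powertop_real UNIV) (simplex_pts S)) K). snd x \<in> U}}
      = U \<inter> simplex_pts S" if "S \<in> K" for S
    using that by auto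
  have sub: "{x \<in> topspace (sum_topology (\<lambda>S. subtopology (powertop_real UNIV) (simplex_pts S)) K). snd x \<in> U}
     \<subseteq> Sigma K (topspace \<circ> (\<lambda>S. subtopology (powertop_real UNIV) (simplex_pts S)))" by auto
  have U': "U \<subseteq> (\<Union>S\<in>K. simplex_pts S)" using U by (simp add: topspace_geom_real)
  show "openin (sum_topology (\<lambda>S. subtopology (powertop_real UNIV) (simplex_pts S)) K)
          {x \<in> topspace (sum_topology (\<lambda>S. subtopology (powertop_real UNIV) (simplex_pts S)) K). snd x \<in> U} =
        openin (geom_real K) U"
    unfolding openin_sum_topology openin_geom_real using sub U' eq by simp
qed

lemma cont_prod_geom:
  fixes h :: "real \<times> ('v \<Rightarrow> real) \<Rightarrow> 'b"
  assumes hS: "\<And>S. S \<in> K \<Longrightarrow> continuous_map (prod_topology (top_of_set {0..1::real}) (subtopology (powertop_real UNIV) (simplex_pts S))) Y h"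
  shows "continuous_map (prod_topology (top_of_set {0..1}) (geom_real K)) Y h"
proof -
  define X where "X = (\<lambda>S::'v set. subtopology (powertop_real UNIV) (simplex_pts S))"
  define Z where "Z = sum_topology X K"
  have q1: "quotient_map Z (geom_real K) snd"
    unfolding Z_def X_def by (rule quotient_sum_geom)
  have q2: "quotient_map (prod_topology (top_of_set {0..1::real}) Z) (prod_topology (top_of_set {0..1}) (geom_real K))
            (\<lambda>(x,y). (x, snd y))"
  proof (rule quotient_map_prod_right[OF _ _ q1])
    show "locally_compact_space (top_of_set {0..1::real})"
      by (simp add: compact_imp_locally_compact_space compact_space_subtopology)
    show "Hausdorff_space (top_of_set {0..1::real}) \<or> regular_space (top_of_set {0..1::real})"
      by (simp add: Hausdorff_space_subtopology)
  qed
  have cg: "continuous_map (prod_topology (top_of_set {0..1::real}) Z) Y (h \<circ> (\<lambda>(x,y). (x, snd y)))"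
    unfolding continuous_map_def
  proof (intro conjI allI impI)
    show "h \<circ> (\<lambda>(x, y). (x, snd y)) \<in> topspace (prod_topology (top_of_set {0..1}) Z) \<rightarrow> topspace Y"
    proof
      fix p assume "p \<in> topspace (prod_topology (top_of_set {0..1::real}) Z)"
      then obtain x S t where p: "p = (x,(S,t))" "x \<in> {0..1}" "S \<in> K" "t \<in> simplex_pts S"
        by (auto simp: Z_def X_def)
      then have "(x,t) \<in> topspace (prod_topology (top_of_set {0..1::real}) (X S))"
        by (simp add: X_def)
      then show "(h \<circ> (\<lambda>(x, y). (x, snd y))) p \<in> topspace Y"
        using hS[OF p(3)] p unfolding X_def continuous_map_def by auto
    qed
    fix W assume W: "openin Y W"
    show "openin (prod_topology (top_of_set {0..1}) Z)
            {p \<in> topspace (prod_topology (top_of_set {0..1}) Z). (h \<circ> (\<lambda>(x, y). (x, snd y))) p \<in> W}"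
      unfolding openin_prod_topology_alt
    proof (intro allI impI)
      fix x y assume xy: "(x, y) \<in> {p \<in> topspace (prod_topology (top_of_set {0..1}) Z). (h \<circ> (\<lambda>(x, y). (x, snd y))) p \<in> W}"
      then have xy1: "x \<in> {0..1}" "y \<in> topspace Z" and xy2: "h (x, snd y) \<in> W"
        by auto
      from xy1(2) obtain S t where y: "y = (S,t)" "S \<in> K" "t \<in> simplex_pts S"
        unfolding Z_def X_def topspace_sum_topology by force
      note x = xy1(1)
      define Ob where "Ob = {p \<in> topspace (prod_topology (top_of_set {0..1::real}) (X S)). h p \<in> W}"
      have op: "openin (prod_topology (top_of_set {0..1::real}) (X S)) Ob"
        unfolding Ob_def X_def by (rule openin_continuous_map_preimage[OF hS[OF y(2)] W])
      have xt: "(x,t) \<in> Ob"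
        using xy2 y x unfolding Ob_def X_def by simp
      have "\<forall>a b. (a,b) \<in> Ob \<longrightarrow> (\<exists>U V. openin (top_of_set {0..1::real}) U \<and> openin (X S) V \<and> a \<in> U \<and> b \<in> V \<and> U \<times> V \<subseteq> Ob)"
        using op by (simp only: openin_prod_topology_alt)
      then have "\<exists>U V. openin (top_of_set {0..1::real}) U \<and> openin (X S) V \<and> x \<in> U \<and> t \<in> V \<and> U \<times> V \<subseteq> Ob"
        using xt by blast
      then obtain U V' where UV: "openin (top_of_set {0..1}) U" "openin (X S) V'" "x \<in> U" "t \<in> V'" "U \<times> V' \<subseteq> Ob"
        by blast
      have V'sub: "V' \<subseteq> simplex_pts S"
        using openin_subset[OF UV(2)] by (simp add: X_def)
      have "openin Z ({S} \<times> V')"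
        unfolding Z_def openin_sum_topology
      proof (intro conjI ballI)
        show "{S} \<times> V' \<subseteq> Sigma K (topspace \<circ> X)"
          using V'sub y(2) by (auto simp: X_def)
        fix S' assume "S' \<in> K"
        show "openin (X S') {x. (S', x) \<in> {S} \<times> V'}"
        proof (cases "S' = S")
          case True then show ?thesis using UV(2) by simp
        next
          case False then show ?thesis by simp
        qed
      qed
      moreover have "U \<times> ({S} \<times> V') \<subseteq> {p \<in> topspace (prod_topology (top_of_set {0..1}) Z). (h \<circ> (\<lambda>(x, y). (x, snd y))) p \<in> W}"
      proof
        fix p assume "p \<in> U \<times> ({S} \<times> V')"
        then obtain x' t' where p: "p = (x',(S,t'))" "x' \<in> U" "t' \<in> V'" by auto
        then have "(x',t') \<in> Ob" using UV(5) by blast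
        then have "x' \<in> {0..1}" "t' \<in> simplex_pts S" "h (x',t') \<in> W" unfolding Ob_def X_def by auto
        then show "p \<in> {p \<in> topspace (prod_topology (top_of_set {0..1}) Z). (h \<circ> (\<lambda>(x, y). (x, snd y))) p \<in> W}"
          using p y(2) by (simp add: Z_def X_def)
      qed
      moreover have "y \<in> {S} \<times> V'" using y UV by simp
      ultimately show "\<exists>U V. openin (top_of_set {0..1}) U \<and> openin Z V \<and> x \<in> U \<and> y \<in> V \<and> U \<times> V \<subseteq>
           {p \<in> topspace (prod_topology (top_of_set {0..1}) Z). (h \<circ> (\<lambda>(x, y). (x, snd y))) p \<in> W}"
        using UV(1,3) by (intro exI[of _ U] exI[of _ "{S} \<times> V'"]) simp
    qed
  qed
  show ?thesis
    by (rule continuous_compose_quotient_map[OF q2 cg])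
qed


definition aseq :: "nat \<Rightarrow> real" where "aseq n = 1 - 1 / 2 ^ n"

lemma aseq_mono: "n \<le> m \<Longrightarrow> aseq n \<le> aseq m"
  unfolding aseq_def by (simp add: frac_le)

lemma aseq_less: "aseq n < aseq (Suc n)"
  unfolding aseq_def by (simp add: field_simps)

lemma aseq_0 [simp]: "aseq 0 = 0" by (simp add: aseq_def)

lemma aseq_lt1: "aseq n < 1" by (simp add: aseq_def)

lemma aseq_ex: "l < 1 \<Longrightarrow> \<exists>n. l \<le> aseq n"
proof -
  assume "l < 1"
  then obtain n where "(1/2::real)^n < 1 - l" using real_arch_pow_inv[of "1 - l" "1/2"] by auto
  then have "l \<le> aseq n" by (simp add: aseq_def power_one_over)
  then show ?thesis by blast
qed

lemma aseq_step: "(aseq (Suc n) - aseq n) * 2 ^ (Suc n) = 1"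
  unfolding aseq_def by (simp add: field_simps)

primrec conc :: "(nat \<Rightarrow> real \<times> 'x \<Rightarrow> 'y) \<Rightarrow> nat \<Rightarrow> real \<times> 'x \<Rightarrow> 'y" where
  "conc h 0 p = h 0 (0, snd p)"
| "conc h (Suc n) p = (if fst p \<le> aseq n then conc h n p
       else h n (min 1 ((fst p - aseq n) * 2 ^ (Suc n)), snd p))"

lemma conc_end:
  assumes hb: "\<And>k t. t \<in> T \<Longrightarrow> h k (1,t) = h (Suc k) (0,t)" and t: "t \<in> T"
    and l: "aseq n \<le> l"
  shows "conc h n (l,t) = h n (0,t)"
proof (cases n)
  case 0 then show ?thesis by simp
next
  case (Suc m)
  have "aseq m < l" using l aseq_less[of m] Suc by simp
  moreover have "(l - aseq m) * 2 ^ Suc m \<ge> 1"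
  proof -
    have "(l - aseq m) * 2 ^ Suc m \<ge> (aseq (Suc m) - aseq m) * 2 ^ Suc m"
      using l Suc by (intro mult_right_mono) auto
    then show ?thesis using aseq_step[of m] by linarith
  qed
  ultimately show ?thesis using Suc hb[OF t, of m] by simp
qed

lemma conc_stable:
  assumes "l \<le> aseq n"
  shows "conc h (n + d) (l,t) = conc h n (l,t)"
proof (induction d)
  case 0 then show ?case by simp
next
  case (Suc d)
  have "l \<le> aseq (n + d)" using assms aseq_mono[of n "n+d"] by simp
  then show ?case using Suc by simp
qed

lemma conc_cont:
  assumes hc: "\<And>k. continuous_map (prod_topology (top_of_set {0..1::real}) X) X (h k)"
    and hb: "\<And>k t. t \<in> topspace X \<Longrightarrow> h k (1,t) = h (Suc k) (0,t)"
  shows "continuous_map (prod_topology (top_of_set {0..1::real}) X) X (conc h n)"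
proof (induction n)
  case 0
  have "continuous_map (prod_topology (top_of_set {0..1::real}) X) (prod_topology (top_of_set {0..1::real}) X) (\<lambda>p. (0, snd p))"
    unfolding continuous_map_pairwise o_def
    by (auto intro!: continuous_map_snd simp: continuous_map_in_subtopology)
  then have "continuous_map (prod_topology (top_of_set {0..1::real}) X) X (h 0 \<circ> (\<lambda>p. (0, snd p)))"
    by (rule continuous_map_compose[OF _ hc])
  then show ?case by (simp add: o_def)
next
  case (Suc n)
  define g where "g p = h n (min 1 ((fst p - aseq n) * 2 ^ (Suc n)), snd p)" for p :: "real \<times> 'a"
  have "continuous_map (prod_topology (top_of_set {0..1::real}) X) X
         (\<lambda>p. if fst p \<le> aseq n then conc h n p else g p)"
  proof (rule continuous_map_cases_le)
    show "continuous_map (prod_topology (top_of_set {0..1::real}) X) euclideanreal fst"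
      by (rule continuous_map_into_fulltopology[OF continuous_map_fst])
    show "continuous_map (prod_topology (top_of_set {0..1::real}) X) euclideanreal (\<lambda>x. aseq n)"
      by simp
    show "continuous_map (subtopology (prod_topology (top_of_set {0..1}) X)
            {x \<in> topspace (prod_topology (top_of_set {0..1}) X). fst x \<le> aseq n}) X (conc h n)"
      using Suc by (rule continuous_map_from_subtopology)
    let ?Y = "subtopology (prod_topology (top_of_set {0..1::real}) X)
            {x \<in> topspace (prod_topology (top_of_set {0..1}) X). aseq n \<le> fst x}"
    have c1: "continuous_map ?Y euclideanreal (\<lambda>p. min 1 ((fst p - aseq n) * 2 ^ (Suc n)))"
      by (intro continuous_intros continuous_map_from_subtopology continuous_map_fst
            continuous_map_into_fulltopology[OF continuous_map_fst])
    have c1': "continuous_map ?Y (top_of_set {0..1}) (\<lambda>p. min 1 ((fst p - aseq n) * 2 ^ (Suc n)))"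
      using c1 by (auto simp: continuous_map_in_subtopology)
    have c2: "continuous_map ?Y X snd"
      by (intro continuous_map_from_subtopology continuous_map_snd)
    have "continuous_map ?Y (prod_topology (top_of_set {0..1::real}) X) (\<lambda>p. (min 1 ((fst p - aseq n) * 2 ^ (Suc n)), snd p))"
      unfolding continuous_map_pairwise o_def using c1' c2 by simp
    then show "continuous_map ?Y X g"
      unfolding g_def using continuous_map_compose[OF _ hc[of n]] by (simp add: o_def)
    fix p assume p: "p \<in> topspace (prod_topology (top_of_set {0..1::real}) X)" "fst p = aseq n"
    then show "conc h n p = g p"
      using conc_end[of "topspace X" h "snd p" n "fst p", OF hb] unfolding g_def
      by (cases p) auto
  qed
  moreover have "conc h (Suc n) = (\<lambda>p. if fst p \<le> aseq n then conc h n p else g p)"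
    by (simp add: g_def fun_eq_iff)
  ultimately show ?case by simp
qed

lemma conc_triv:
  assumes hb: "\<And>k t. t \<in> T \<Longrightarrow> h k (1,t) = h (Suc k) (0,t)" and t: "t \<in> T" and t': "t \<in> A"
    and triv: "\<And>k l. k \<ge> k0 \<Longrightarrow> l \<in> {0..1} \<Longrightarrow> h k (l,t) = t"
    and l: "aseq k0 \<le> l"
  shows "conc h (k0 + d) (l,t) = t"
proof (induction d)
  case 0
  show ?case using conc_end[of T h t k0 l, OF hb t l] triv[of k0 0] by simp
next
  case (Suc d)
  show ?case
  proof (cases "l \<le> aseq (k0 + d)")
    case True then show ?thesis using Suc by simp
  next
    case False
    then have "min 1 ((l - aseq (k0+d)) * 2 ^ Suc (k0+d)) \<in> {0..1}" by simp
    then show ?thesis using False triv[of "k0+d"] by simp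
  qed
qed


lemma infinite_concat:
  fixes h :: "nat \<Rightarrow> real \<times> ('v \<Rightarrow> real) \<Rightarrow> ('v \<Rightarrow> real)" and K :: "'v set set"
  assumes hc: "\<And>k. continuous_map (prod_topology (top_of_set {0..1::real}) (geom_real K)) (geom_real K) (h k)"
    and hb: "\<And>k t. t \<in> topspace (geom_real K) \<Longrightarrow> h k (1,t) = h (Suc k) (0,t)"
    and ht: "\<And>S. S \<in> K \<Longrightarrow> \<exists>k0. \<forall>k\<ge>k0. \<forall>l\<in>{0..1}. \<forall>t\<in>simplex_pts S. h k (l,t) = t"
  shows "homotopic_with (\<lambda>_. True) (geom_real K) (geom_real K) (\<lambda>t. h 0 (0,t)) id"
proof -
  define H where "H p = (if fst p < 1 then conc h (LEAST n. fst p \<le> aseq n) p else snd p)" for p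
  have H0: "H (0,x) = h 0 (0,x)" for x
  proof -
    have "(LEAST n. (0::real) \<le> aseq n) = 0" by (rule Least_eq_0) simp
    then show ?thesis by (simp add: H_def)
  qed
  have H1: "H (1,x) = id x" for x by (simp add: H_def)
  have cont: "continuous_map (prod_topology (top_of_set {0..1::real}) (geom_real K)) (geom_real K) H"
  proof (rule cont_prod_geom)
    fix S assume S: "S \<in> K"
    obtain k0 where k0: "\<forall>k\<ge>k0. \<forall>l\<in>{0..1}. \<forall>t\<in>simplex_pts S. h k (l,t) = t"
      using ht[OF S] by blast
    have ci: "continuous_map (prod_topology (top_of_set {0..1::real}) (subtopology (powertop_real UNIV) (simplex_pts S)))
        (prod_topology (top_of_set {0..1::real}) (geom_real K)) (\<lambda>(x,y). (id x, id y))"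
      unfolding continuous_map_prod_top using cont_simplex_incl[OF S] by (simp add: id_def)
    have cc: "continuous_map (prod_topology (top_of_set {0..1::real}) (subtopology (powertop_real UNIV) (simplex_pts S)))
        (geom_real K) (conc h k0 \<circ> (\<lambda>(x,y). (id x, id y)))"
      by (rule continuous_map_compose[OF ci conc_cont[of "geom_real K" h k0, OF hc hb]])
    show "continuous_map (prod_topology (top_of_set {0..1::real}) (subtopology (powertop_real UNIV) (simplex_pts S)))
        (geom_real K) H"
    proof (rule continuous_map_eq[OF cc])
      fix p assume p: "p \<in> topspace (prod_topology (top_of_set {0..1::real}) (subtopology (powertop_real UNIV) (simplex_pts S)))"
      then obtain l t where pl: "p = (l,t)" "l \<in> {0..1}" "t \<in> simplex_pts S" by auto
      have tT: "t \<in> topspace (geom_real K)" using S pl(3) by (auto simp: topspace_geom_real)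
      have triv: "\<And>k l. k \<ge> k0 \<Longrightarrow> l \<in> {0..1} \<Longrightarrow> h k (l,t) = t" using k0 pl(3) by blast
      have LT: "conc h (k0 + d) (l',t) = t" if "aseq k0 \<le> l'" for d l'
        by (rule conc_triv[of "topspace (geom_real K)" h t, OF hb tT _ triv that]) auto
      show "(conc h k0 \<circ> (\<lambda>(x, y). (id x, id y))) p = H p"
      proof (cases "l < 1")
        case False
        then have "l = 1" using pl by auto
        then show ?thesis using LT[of 1 0] aseq_lt1[of k0] pl by (simp add: H_def)
      next
        case True
        define n where "n = (LEAST n. l \<le> aseq n)"
        have ln: "l \<le> aseq n" unfolding n_def using aseq_ex[OF True] by (metis LeastI)
        have Hp: "H p = conc h n (l,t)" using True pl by (simp add: H_def n_def)
        show ?thesis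
        proof (cases "l \<le> aseq k0")
          case True
          then have "n \<le> k0" unfolding n_def by (rule Least_le)
          then obtain d where "k0 = n + d" using le_Suc_ex by blast
          then show ?thesis using Hp conc_stable[OF ln, of h d t] pl by simp
        next
          case False
          then have "\<not> n \<le> k0" using ln aseq_mono[of n k0] by auto
          then obtain d where "n = k0 + d" using le_Suc_ex[of k0 n] by auto
          then show ?thesis using Hp LT[of l 0] LT[of l d] False pl by simp
        qed
      qed
    qed
  qed
  show ?thesis
    unfolding homotopic_with_def using cont H0 H1 by blast
qed


definition cw :: "('p set \<Rightarrow> real) \<Rightarrow> 'p set \<Rightarrow> real" where
  "cw t x = sum t {y. t y \<noteq> 0 \<and> y \<subset> x}"

definition aw :: "real \<Rightarrow> ('p set \<Rightarrow> real) \<Rightarrow> 'p set \<Rightarrow> real" where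
  "aw l t x = min (t x) (max 0 (1 - l - cw t x))"

definition PH :: "('p set \<Rightarrow> 'q set) \<Rightarrow> ('p set \<Rightarrow> 'q set) \<Rightarrow> real \<Rightarrow> ('p set \<Rightarrow> real) \<Rightarrow> ('q set \<Rightarrow> real)" where
  "PH \<alpha> \<beta> l t = (\<lambda>q. sum (aw l t) {x. t x \<noteq> 0 \<and> \<alpha> x = q} + sum (\<lambda>x. t x - aw l t x) {x. t x \<noteq> 0 \<and> \<beta> x = q})"

lemma simplex_ptsD:
  assumes "t \<in> simplex_pts S"
  shows "\<And>v. 0 \<le> t v" "\<And>v. t v \<noteq> 0 \<Longrightarrow> v \<in> S" "sum t S = 1"
  using assms unfolding simplex_pts_def by auto

lemma cw_S:
  assumes t: "t \<in> simplex_pts S" and fin: "finite S"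
  shows "cw t x = sum t {y \<in> S. y \<subset> x}"
  unfolding cw_def
  by (rule sum.mono_neutral_cong_left) (use simplex_ptsD[OF t] fin in auto)

lemma cw_nonneg:
  assumes t: "t \<in> simplex_pts S" and fin: "finite S"
  shows "0 \<le> cw t x"
  unfolding cw_S[OF t fin] using simplex_ptsD(1)[OF t] by (simp add: sum_nonneg)

lemma aw_nonneg: "0 \<le> t x \<Longrightarrow> 0 \<le> aw l t x"
  by (simp add: aw_def)

lemma aw_le: "aw l t x \<le> t x"
  by (simp add: aw_def)

lemma aw_zero: "t x = 0 \<Longrightarrow> aw l t x = 0"
  by (simp add: aw_def)

lemma PH_S:
  assumes t: "t \<in> simplex_pts S" and fin: "finite S"
  shows "PH \<alpha> \<beta> l t q = sum (aw l t) {x \<in> S. \<alpha> x = q} + sum (\<lambda>x. t x - aw l t x) {x \<in> S. \<beta> x = q}"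
proof -
  have "sum (aw l t) {x. t x \<noteq> 0 \<and> \<alpha> x = q} = sum (aw l t) {x \<in> S. \<alpha> x = q}"
    by (rule sum.mono_neutral_cong_left) (use simplex_ptsD[OF t] fin in \<open>auto simp: aw_zero\<close>)
  moreover have "sum (\<lambda>x. t x - aw l t x) {x. t x \<noteq> 0 \<and> \<beta> x = q} = sum (\<lambda>x. t x - aw l t x) {x \<in> S. \<beta> x = q}"
    by (rule sum.mono_neutral_cong_left) (use simplex_ptsD[OF t] fin in \<open>auto simp: aw_zero\<close>)
  ultimately show ?thesis by (simp add: PH_def)
qed

lemma cw_plus_le:
  assumes t: "t \<in> simplex_pts S" and fin: "finite S" and x: "x \<in> S"
  shows "cw t x + t x \<le> 1"
proof -
  have "cw t x + t x = sum t (insert x {y \<in> S. y \<subset> x})"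
    unfolding cw_S[OF t fin] using fin by (subst sum.insert) auto
  also have "\<dots> \<le> sum t S"
    using fin x simplex_ptsD(1)[OF t] by (intro sum_mono2) auto
  finally show ?thesis using simplex_ptsD(3)[OF t] by simp
qed

lemma PH_0:
  assumes t: "t \<in> simplex_pts S" and fin: "finite S"
  shows "PH \<alpha> \<beta> 0 t = real_map \<alpha> t"
proof -
  have "aw 0 t x = t x" if "t x \<noteq> 0" for x
  proof -
    have "x \<in> S" using simplex_ptsD(2)[OF t that] .
    then have "cw t x + t x \<le> 1" by (rule cw_plus_le[OF t fin])
    then show ?thesis unfolding aw_def by simp
  qed
  then show ?thesis unfolding PH_def real_map_def fun_eq_iff
    by (auto intro!: sum.cong)
qed

lemma PH_1:
  assumes t: "t \<in> simplex_pts S" and fin: "finite S"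
  shows "PH \<alpha> \<beta> 1 t = real_map \<beta> t"
proof -
  have "aw 1 t x = 0" for x
    using cw_nonneg[OF t fin, of x] simplex_ptsD(1)[OF t, of x] unfolding aw_def by simp
  then show ?thesis unfolding PH_def real_map_def fun_eq_iff by simp
qed

lemma PH_id:
  assumes t: "t \<in> simplex_pts S" and fin: "finite S"
    and ids: "\<And>x. x \<in> S \<Longrightarrow> \<alpha> x = x" "\<And>x. x \<in> S \<Longrightarrow> \<beta> x = x"
  shows "PH \<alpha> \<beta> l t = t"
proof
  fix q
  have e1: "{x \<in> S. \<alpha> x = q} = (if q \<in> S then {q} else {})" using ids by auto
  have e2: "{x \<in> S. \<beta> x = q} = (if q \<in> S then {q} else {})" using ids by auto
  show "PH \<alpha> \<beta> l t q = t q"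
    unfolding PH_S[OF t fin] e1 e2 using simplex_ptsD(2)[OF t, of q] by auto
qed


locale pmaps =
  fixes P :: "'p set set" and P' :: "'q set set" and \<alpha> \<beta> :: "'p set \<Rightarrow> 'q set"
  assumes aP: "\<And>x. x \<in> P \<Longrightarrow> \<alpha> x \<in> P'" and bP: "\<And>x. x \<in> P \<Longrightarrow> \<beta> x \<in> P'"
    and amono: "\<And>x y. x \<in> P \<Longrightarrow> y \<in> P \<Longrightarrow> x \<subseteq> y \<Longrightarrow> \<alpha> x \<subseteq> \<alpha> y"
    and bmono: "\<And>x y. x \<in> P \<Longrightarrow> y \<in> P \<Longrightarrow> x \<subseteq> y \<Longrightarrow> \<beta> x \<subseteq> \<beta> y"
    and ab: "\<And>x. x \<in> P \<Longrightarrow> \<alpha> x \<subseteq> \<beta> x"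
begin

lemma PH_image:
  assumes S: "S \<in> order_complex P (\<subseteq>)" and t: "t \<in> simplex_pts S"
  shows "PH \<alpha> \<beta> l t \<in> simplex_pts {q. PH \<alpha> \<beta> l t q \<noteq> 0}"
    and "{q. PH \<alpha> \<beta> l t q \<noteq> 0} \<in> order_complex P' (\<subseteq>)"
    and "{q. PH \<alpha> \<beta> l t q \<noteq> 0} \<subseteq> \<alpha> ` S \<union> \<beta> ` S"
proof -
  have fin: "finite S" and SP: "S \<subseteq> P" and ch: "\<And>x y. x \<in> S \<Longrightarrow> y \<in> S \<Longrightarrow> x \<subseteq> y \<or> y \<subseteq> x"
    using S unfolding order_complex_def by auto
  define u where "u = PH \<alpha> \<beta> l t"
  define W where "W = \<alpha> ` S \<union> \<beta> ` S"
  have finW: "finite W" using fin by (simp add: W_def)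
  have tn: "\<And>v. 0 \<le> t v" using simplex_ptsD(1)[OF t] .
  have uS: "u q = sum (aw l t) {x \<in> S. \<alpha> x = q} + sum (\<lambda>x. t x - aw l t x) {x \<in> S. \<beta> x = q}" for q
    unfolding u_def by (rule PH_S[OF t fin])
  have un: "0 \<le> u q" for q
    unfolding uS using tn aw_nonneg aw_le by (intro add_nonneg_nonneg sum_nonneg) (auto simp: algebra_simps)
  have supp: "(\<exists>x\<in>S. \<alpha> x = q \<and> aw l t x \<noteq> 0) \<or> (\<exists>x\<in>S. \<beta> x = q \<and> t x - aw l t x \<noteq> 0)" if "u q \<noteq> 0" for q
  proof (rule ccontr)
    assume "\<not> ?thesis"
    then have "sum (aw l t) {x \<in> S. \<alpha> x = q} = 0" "sum (\<lambda>x. t x - aw l t x) {x \<in> S. \<beta> x = q} = 0"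
      by (auto intro!: sum.neutral)
    then show False using that uS by simp
  qed
  have suppW: "{q. u q \<noteq> 0} \<subseteq> W"
    using supp unfolding W_def by blast
  have sumW: "sum u W = 1"
  proof -
    have "sum u W = sum (\<lambda>q. sum (aw l t) {x \<in> S. \<alpha> x = q}) W + sum (\<lambda>q. sum (\<lambda>x. t x - aw l t x) {x \<in> S. \<beta> x = q}) W"
      unfolding uS by (simp add: sum.distrib)
    also have "\<dots> = sum (aw l t) S + sum (\<lambda>x. t x - aw l t x) S"
      using fin finW by (simp add: sum.group W_def)
    also have "\<dots> = sum t S" by (simp add: sum.distrib[symmetric])
    also have "\<dots> = 1" using simplex_ptsD(3)[OF t] .
    finally show ?thesis .
  qed
  have sumsupp: "sum u {q. u q \<noteq> 0} = 1"
  proof -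
    have "sum u {q. u q \<noteq> 0} = sum u W"
      by (rule sum.mono_neutral_left[OF finW suppW]) auto
    then show ?thesis using sumW by simp
  qed
  show "PH \<alpha> \<beta> l t \<in> simplex_pts {q. PH \<alpha> \<beta> l t q \<noteq> 0}"
    using un sumsupp unfolding simplex_pts_def u_def by auto
  show "{q. PH \<alpha> \<beta> l t q \<noteq> 0} \<subseteq> \<alpha> ` S \<union> \<beta> ` S"
    using suppW unfolding u_def W_def .
  have chain: "q1 \<subseteq> q2 \<or> q2 \<subseteq> q1" if q1: "u q1 \<noteq> 0" and q2: "u q2 \<noteq> 0" for q1 q2
  proof -
    have mixed: "\<alpha> x1 \<subseteq> \<beta> x2" if x1: "x1 \<in> S" "aw l t x1 \<noteq> 0" and x2: "x2 \<in> S" "t x2 - aw l t x2 \<noteq> 0" for x1 x2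
    proof -
      have "x1 \<subseteq> x2"
      proof (rule ccontr)
        assume "\<not> x1 \<subseteq> x2"
        then have lt: "x2 \<subset> x1" using ch[OF x1(1) x2(1)] by blast
        have "t x1 \<noteq> 0" using x1(2) aw_zero by metis
        then have a1: "0 < 1 - l - cw t x1" using x1(2) tn[of x1] unfolding aw_def by (auto simp: min_def max_def split: if_splits)
        have a2: "1 - l - cw t x2 < t x2" using x2(2) aw_le[of l t x2] unfolding aw_def by (auto simp: min_def max_def split: if_splits)
        have "cw t x2 + t x2 = sum t (insert x2 {y \<in> S. y \<subset> x2})"
          unfolding cw_S[OF t fin] using fin by (subst sum.insert) auto
        also have "\<dots> \<le> sum t {y \<in> S. y \<subset> x1}"
          using fin x2(1) lt tn by (intro sum_mono2) auto
        also have "\<dots> = cw t x1" unfolding cw_S[OF t fin] ..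
        finally show False using a1 a2 by linarith
      qed
      then have "\<alpha> x1 \<subseteq> \<alpha> x2" using amono[of x1 x2] SP x1(1) x2(1) by auto
      moreover have "\<alpha> x2 \<subseteq> \<beta> x2" using ab[of x2] SP x2(1) by auto
      ultimately show ?thesis by (rule order_trans)
    qed
    from supp[OF q1] supp[OF q2] show ?thesis
    proof (elim disjE bexE conjE)
      fix x1 x2 assume "x1 \<in> S" "\<alpha> x1 = q1" "x2 \<in> S" "\<alpha> x2 = q2"
      then show ?thesis using ch[of x1 x2] amono[of x1 x2] amono[of x2 x1] SP by auto
    next
      fix x1 x2 assume "x1 \<in> S" "\<beta> x1 = q1" "x2 \<in> S" "\<beta> x2 = q2"
      then show ?thesis using ch[of x1 x2] bmono[of x1 x2] bmono[of x2 x1] SP by auto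
    next
      fix x1 x2 assume "x1 \<in> S" "\<alpha> x1 = q1" "aw l t x1 \<noteq> 0" "x2 \<in> S" "\<beta> x2 = q2" "t x2 - aw l t x2 \<noteq> 0"
      then show ?thesis using mixed[of x1 x2] by simp
    next
      fix x1 x2 assume "x1 \<in> S" "\<beta> x1 = q1" "t x1 - aw l t x1 \<noteq> 0" "x2 \<in> S" "\<alpha> x2 = q2" "aw l t x2 \<noteq> 0"
      then show ?thesis using mixed[of x2 x1] by simp
    qed
  qed
  have ne: "{q. u q \<noteq> 0} \<noteq> {}"
  proof
    assume "{q. u q \<noteq> 0} = {}"
    then show False using sumsupp by simp
  qed
  have sub: "{q. u q \<noteq> 0} \<subseteq> P'" using suppW SP aP bP unfolding W_def by blast
  show "{q. PH \<alpha> \<beta> l t q \<noteq> 0} \<in> order_complex P' (\<subseteq>)"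
    unfolding order_complex_def using chain ne sub finite_subset[OF suppW finW] unfolding u_def by auto
qed

end


context pmaps begin

lemma PH_cont:
  "continuous_map (prod_topology (top_of_set {0..1::real}) (poset_real P (\<subseteq>))) (poset_real P' (\<subseteq>))
     (\<lambda>p. PH \<alpha> \<beta> (fst p) (snd p))"
  unfolding poset_real_def
proof (rule cont_prod_geom)
  fix S assume S: "S \<in> order_complex P (\<subseteq>)"
  have fin: "finite S" using S unfolding order_complex_def by auto
  define Z where "Z = prod_topology (top_of_set {0..1::real}) (subtopology (powertop_real UNIV) (simplex_pts S))"
  define \<T> where "\<T> = {T \<in> order_complex P' (\<subseteq>). T \<subseteq> \<alpha> ` S \<union> \<beta> ` S}"
  have finT: "finite \<T>"
  proof -
    have "\<T> \<subseteq> Pow (\<alpha> ` S \<union> \<beta> ` S)" unfolding \<T>_def by auto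
    then show ?thesis using fin by (meson finite_Pow_iff finite_Un finite_imageI finite_subset)
  qed
  have cp: "continuous_map Z euclideanreal (\<lambda>p. snd p y)" for y
  proof -
    have "continuous_map (subtopology (powertop_real UNIV) (simplex_pts S)) euclideanreal (\<lambda>t. t y)"
      by (rule continuous_map_from_subtopology[OF continuous_map_product_projection]) simp
    then have "continuous_map Z euclideanreal ((\<lambda>t. t y) \<circ> snd)"
      unfolding Z_def by (rule continuous_map_compose[OF continuous_map_snd])
    then show ?thesis by (simp add: o_def)
  qed
  have cf: "continuous_map Z euclideanreal fst"
    unfolding Z_def by (rule continuous_map_into_fulltopology[OF continuous_map_fst])
  define G where "G q p = sum (\<lambda>x. min (snd p x) (max 0 (1 - fst p - sum (\<lambda>y. snd p y) {y\<in>S. y \<subset> x}))) {x\<in>S. \<alpha> x = q}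
     + sum (\<lambda>x. snd p x - min (snd p x) (max 0 (1 - fst p - sum (\<lambda>y. snd p y) {y\<in>S. y \<subset> x}))) {x\<in>S. \<beta> x = q}" for q and p :: "real \<times> ('p set \<Rightarrow> real)"
  have cG: "continuous_map Z euclideanreal (G q)" for q
    unfolding G_def[abs_def] using fin
    by (intro continuous_intros cp cf) auto
  have cPT: "continuous_map Z (powertop_real UNIV) (\<lambda>p. PH \<alpha> \<beta> (fst p) (snd p))"
    unfolding continuous_map_componentwise_UNIV
  proof
    fix q
    show "continuous_map Z euclideanreal (\<lambda>p. PH \<alpha> \<beta> (fst p) (snd p) q)"
    proof (rule continuous_map_eq[OF cG[of q]])
      fix p assume "p \<in> topspace Z"
      then have t: "snd p \<in> simplex_pts S" unfolding Z_def by auto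
      show "G q p = PH \<alpha> \<beta> (fst p) (snd p) q"
        unfolding PH_S[OF t fin] G_def aw_def cw_S[OF t fin] ..
    qed
  qed
  show "continuous_map Z (geom_real (order_complex P' (\<subseteq>))) (\<lambda>p. PH \<alpha> \<beta> (fst p) (snd p))"
  proof (rule cont_into_geom[OF cPT finT])
    show "\<T> \<subseteq> order_complex P' (\<subseteq>)" unfolding \<T>_def by auto
    show "finite T" if "T \<in> \<T>" for T using that unfolding \<T>_def order_complex_def by auto
    fix p assume "p \<in> topspace Z"
    then have t: "snd p \<in> simplex_pts S" unfolding Z_def by auto
    have "{q. PH \<alpha> \<beta> (fst p) (snd p) q \<noteq> 0} \<in> \<T>"
      unfolding \<T>_def using PH_image(2,3)[OF S t] by auto
    then show "PH \<alpha> \<beta> (fst p) (snd p) \<in> (\<Union>T\<in>\<T>. simplex_pts T)"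
      using PH_image(1)[OF S t] by blast
  qed
qed

end


definition Rn :: "nat \<Rightarrow> int \<Rightarrow> int" where
  "Rn n s = (if s < - int n then - int n + ((s + int n) mod 2)
     else if s > int n + 1 then int n + 1 - ((s - int n - 1) mod 2) else s)"

lemma Rn_range: "- int n \<le> Rn n s \<and> Rn n s \<le> int n + 1"
  unfolding Rn_def by presburger

lemma Rn_id: "- int n \<le> s \<Longrightarrow> s \<le> int n + 1 \<Longrightarrow> Rn n s = s"
  unfolding Rn_def by presburger

lemma Rn_mod: "Rn n s mod 2 = s mod 2"
  unfolding Rn_def by (auto split: if_splits; presburger)

lemma Rn_adj1: "\<bar>Rn n (s + 1) - Rn n s\<bar> = 1"
  unfolding Rn_def by (auto split: if_splits; presburger)

lemma Rn_adj: "\<bar>s - t\<bar> = 1 \<Longrightarrow> \<bar>Rn n s - Rn n t\<bar> = 1"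
proof -
  assume "\<bar>s - t\<bar> = 1"
  then have "s = t + 1 \<or> t = s + 1" by auto
  then show ?thesis using Rn_adj1[of n s] Rn_adj1[of n t] by auto
qed

lemma Rn_adj2a: "\<bar>Rn n (s + 1) - Rn (Suc n) s\<bar> = 1"
  unfolding Rn_def by (auto split: if_splits; presburger)

lemma Rn_adj2b: "\<bar>Rn n s - Rn (Suc n) (s + 1)\<bar> = 1"
  unfolding Rn_def by (auto split: if_splits; presburger)

lemma Rn_adj2: "\<bar>s - t\<bar> = 1 \<Longrightarrow> \<bar>Rn n s - Rn (Suc n) t\<bar> = 1"
proof -
  assume "\<bar>s - t\<bar> = 1"
  then have "s = t + 1 \<or> t = s + 1" by auto
  then show ?thesis using Rn_adj2a[of n t] Rn_adj2b[of n s] by auto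
qed

lemma Rn_Rn:
  assumes nm: "n \<le> m"
  shows "Rn n (Rn m s) = Rn n s"
proof -
  define N where "N = int n"
  define M where "M = int m"
  have NM: "N \<le> M" using nm by (simp add: N_def M_def)
  have R: "Rn k x = (if x < - int k then - int k + ((x + int k) mod 2)
     else if x > int k + 1 then int k + 1 - ((x - int k - 1) mod 2) else x)" for k x
    by (simp add: Rn_def)
  show ?thesis
  proof (cases "s < - M")
    case True
    define p where "p = (s + M) mod 2"
    have p: "p = 0 \<or> p = 1" unfolding p_def by presburger
    have Rm: "Rn m s = - M + p" using True by (simp add: R M_def p_def)
    have Rns: "Rn n s = - N + ((s + N) mod 2)" using True NM by (simp add: R N_def)
    show ?thesis
    proof (cases "- M + p < - N")
      case True
      then have "Rn n (- M + p) = - N + ((- M + p + N) mod 2)" by (simp add: R N_def)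
      moreover have "(- M + p + N) mod 2 = (s + N) mod 2" unfolding p_def by presburger
      ultimately show ?thesis using Rm Rns by metis
    next
      case False
      then have "Rn n (- M + p) = - M + p" using p NM by (auto simp: R N_def)
      moreover have "- M + p = - N + ((s + N) mod 2)" using False NM p unfolding p_def by presburger
      ultimately show ?thesis using Rm Rns by metis
    qed
  next
    case False
    note F1 = False
    show ?thesis
    proof (cases "s > M + 1")
      case True
      define p where "p = (s - M - 1) mod 2"
      have p: "p = 0 \<or> p = 1" unfolding p_def by presburger
      have Rm: "Rn m s = M + 1 - p" using True F1 by (simp add: R M_def p_def)
      have Rns: "Rn n s = N + 1 - ((s - N - 1) mod 2)" using True NM by (simp add: R N_def)
      show ?thesis
      proof (cases "M + 1 - p > N + 1")
        case True
        then have "Rn n (M + 1 - p) = N + 1 - ((M + 1 - p - N - 1) mod 2)" using NM p by (auto simp: R N_def)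
        moreover have "(M + 1 - p - N - 1) mod 2 = (s - N - 1) mod 2" unfolding p_def by presburger
        ultimately show ?thesis using Rm Rns by metis
      next
        case False
        then have "Rn n (M + 1 - p) = M + 1 - p" using p NM by (auto simp: R N_def)
        moreover have "M + 1 - p = N + 1 - ((s - N - 1) mod 2)" using False NM p unfolding p_def by presburger
        ultimately show ?thesis using Rm Rns by metis
      qed
    next
      case False
      then have "Rn m s = s" using F1 by (simp add: R M_def)
      then show ?thesis by simp
    qed
  qed
qed

lemma retr_Rn:
  assumes "- int m - 1 \<le> s" "s \<le> int m + 2"
  shows "retr m s = Rn m s"
proof -
  consider "s = - int m - 1" | "s = int m + 2" | "- int m \<le> s \<and> s \<le> int m + 1" using assms by linarith
  then show ?thesis
  proof cases
    case 1 then show ?thesis by (simp add: retr_def Rn_def)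
  next
    case 2 then show ?thesis by (simp add: retr_def Rn_def)
  next
    case 3 then show ?thesis by (auto simp: retr_def Rn_def)
  qed
qed

lemma Rn_retr: "n \<le> m \<Longrightarrow> - int m - 1 \<le> s \<Longrightarrow> s \<le> int m + 2 \<Longrightarrow> Rn n (retr m s) = Rn n s"
  using retr_Rn Rn_Rn by metis


abbreviation Iv :: "nat \<Rightarrow> int set" where "Iv n \<equiv> L_verts (- int n) (int n + 1)"

lemma Iv_mem: "s \<in> Iv n \<longleftrightarrow> - int n \<le> s \<and> s \<le> int n + 1" by (simp add: L_verts_def)

lemma Rn_in: "Rn n s \<in> Iv n" using Rn_range by (simp add: L_verts_def)

lemma W_iff: "h \<in> XLn_verts V eps n \<longleftrightarrow> h \<in> extensional (Iv n) \<and> (\<forall>s\<in>Iv n. h s \<in> V \<and> eps (h s) = s mod 2)"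
  by (auto simp: XLn_verts_def hom_verts_def L_eps_def)

lemma retr_in: "- int m - 1 \<le> s \<Longrightarrow> s \<le> int m + 2 \<Longrightarrow> retr m s \<in> Iv m"
  using retr_Rn Rn_in by metis

lemma lift_val:
  assumes "h \<in> extensional (Iv n)"
  shows "lift n d h \<in> extensional (Iv (n+d)) \<and> (\<forall>s\<in>Iv (n+d). lift n d h s = h (Rn n s))"
proof (induction d)
  case 0 then show ?case using assms by (simp add: Rn_id Iv_mem)
next
  case (Suc d)
  have eqI: "L_verts (- int (n+d) - 1) (int (n+d) + 2) = Iv (n + Suc d)" by (simp add: L_verts_def)
  have lf: "lift n (Suc d) h = restrict (lift n d h \<circ> retr (n+d)) (Iv (n + Suc d))"
    by (simp only: lift.simps retr_star_def eqI)
  show ?case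
  proof
    show "lift n (Suc d) h \<in> extensional (Iv (n + Suc d))" unfolding lf by simp
    show "\<forall>s\<in>Iv (n + Suc d). lift n (Suc d) h s = h (Rn n s)"
    proof
      fix s assume s: "s \<in> Iv (n + Suc d)"
      then have b: "- int (n+d) - 1 \<le> s" "s \<le> int (n+d) + 2" by (auto simp: L_verts_def)
      have "lift n (Suc d) h s = lift n d h (retr (n+d) s)" using s unfolding lf by simp
      also have "\<dots> = h (Rn n (retr (n+d) s))" using Suc.IH retr_in[OF b] by blast
      also have "\<dots> = h (Rn n s)" using Rn_retr[OF _ b] by simp
      finally show "lift n (Suc d) h s = h (Rn n s)" .
    qed
  qed
qed

lemma XL_rel_iff:
  "((n,h),(m,h')) \<in> XL_rel V eps \<longleftrightarrow>
     h \<in> XLn_verts V eps n \<and> h' \<in> XLn_verts V eps m \<and> h \<circ> Rn n = h' \<circ> Rn m"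
proof
  assume r: "((n,h),(m,h')) \<in> XL_rel V eps"
  then have hW: "h \<in> XLn_verts V eps n" and h'W: "h' \<in> XLn_verts V eps m"
    and "\<exists>k. n \<le> k \<and> m \<le> k \<and> lift n (k-n) h = lift m (k-m) h'"
    by (auto simp: XL_rel_def)
  then obtain k where k: "n \<le> k" "m \<le> k" "lift n (k-n) h = lift m (k-m) h'" by blast
  have eh: "h \<in> extensional (Iv n)" and eh': "h' \<in> extensional (Iv m)" using hW h'W by (auto simp: W_iff)
  have "h (Rn n s) = h' (Rn m s)" for s
  proof -
    have s': "Rn k s \<in> Iv (n + (k - n))" "Rn k s \<in> Iv (m + (k - m))" using Rn_in[of k s] k by auto
    have "h (Rn n s) = h (Rn n (Rn k s))" using Rn_Rn[OF k(1)] by simp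
    also have "\<dots> = lift n (k-n) h (Rn k s)" using lift_val[OF eh, of "k-n"] s'(1) by simp
    also have "\<dots> = lift m (k-m) h' (Rn k s)" using k(3) by simp
    also have "\<dots> = h' (Rn m (Rn k s))" using lift_val[OF eh', of "k-m"] s'(2) by simp
    also have "\<dots> = h' (Rn m s)" using Rn_Rn[OF k(2)] by simp
    finally show ?thesis .
  qed
  then show "h \<in> XLn_verts V eps n \<and> h' \<in> XLn_verts V eps m \<and> h \<circ> Rn n = h' \<circ> Rn m"
    using hW h'W by (auto simp: fun_eq_iff)
next
  assume r: "h \<in> XLn_verts V eps n \<and> h' \<in> XLn_verts V eps m \<and> h \<circ> Rn n = h' \<circ> Rn m"
  define k where "k = max n m"
  have k: "n \<le> k" "m \<le> k" by (auto simp: k_def)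
  have eh: "h \<in> extensional (Iv n)" and eh': "h' \<in> extensional (Iv m)" using r by (auto simp: W_iff)
  have I1: "Iv (n + (k - n)) = Iv k" and I2: "Iv (m + (k - m)) = Iv k" using k by auto
  have "lift n (k-n) h = lift m (k-m) h'"
  proof (rule extensionalityI)
    show "lift n (k-n) h \<in> extensional (Iv k)" using lift_val[OF eh, of "k-n"] I1 by simp
    show "lift m (k-m) h' \<in> extensional (Iv k)" using lift_val[OF eh', of "k-m"] I2 by simp
    fix s assume s: "s \<in> Iv k"
    have "lift n (k-n) h s = h (Rn n s)" using lift_val[OF eh, of "k-n"] I1 s by simp
    also have "\<dots> = h' (Rn m s)" using r by (metis comp_apply)
    also have "\<dots> = lift m (k-m) h' s" using lift_val[OF eh', of "k-m"] I2 s by simp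
    finally show "lift n (k-n) h s = lift m (k-m) h' s" .
  qed
  then show "((n,h),(m,h')) \<in> XL_rel V eps"
    using r k unfolding XL_rel_def by auto
qed

definition cval :: "(nat \<times> (int \<Rightarrow> 'a)) set \<Rightarrow> int \<Rightarrow> 'a" where
  "cval A = snd (SOME p. p \<in> A) \<circ> Rn (fst (SOME p. p \<in> A))"

definition inc :: "'a set \<Rightarrow> ('a \<Rightarrow> int) \<Rightarrow> nat \<Rightarrow> (int \<Rightarrow> 'a) \<Rightarrow> (nat \<times> (int \<Rightarrow> 'a)) set" where
  "inc V eps n h = XL_rel V eps `` {(n,h)}"

lemma inc_mem: "h \<in> XLn_verts V eps n \<Longrightarrow> (m,h') \<in> inc V eps n h \<longleftrightarrow> h' \<in> XLn_verts V eps m \<and> h' \<circ> Rn m = h \<circ> Rn n"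
  unfolding inc_def using XL_rel_iff by fastforce

lemma cval_inc:
  assumes h: "h \<in> XLn_verts V eps n"
  shows "cval (inc V eps n h) = h \<circ> Rn n"
proof -
  have ex: "\<exists>p. p \<in> inc V eps n h" using inc_mem[OF h, of n h] h by blast
  obtain m h' where p: "(SOME p. p \<in> inc V eps n h) = (m,h')" by fastforce
  have "(m,h') \<in> inc V eps n h" using someI_ex[OF ex] p by simp
  then have "h' \<circ> Rn m = h \<circ> Rn n" using inc_mem[OF h] by blast
  then show ?thesis unfolding cval_def p by simp
qed

lemma XL_verts_iff: "A \<in> XL_verts V eps \<longleftrightarrow> (\<exists>n h. h \<in> XLn_verts V eps n \<and> A = inc V eps n h)"
  by (auto simp: XL_verts_def quotient_def inc_def)

lemma inc_eq:
  assumes "h \<in> XLn_verts V eps n" "h' \<in> XLn_verts V eps m"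
  shows "inc V eps n h = inc V eps m h' \<longleftrightarrow> h \<circ> Rn n = h' \<circ> Rn m"
proof
  assume "inc V eps n h = inc V eps m h'"
  then show "h \<circ> Rn n = h' \<circ> Rn m" using cval_inc[OF assms(1)] cval_inc[OF assms(2)] by simp
next
  assume e: "h \<circ> Rn n = h' \<circ> Rn m"
  show "inc V eps n h = inc V eps m h'"
  proof (rule set_eqI)
    fix p :: "nat \<times> (int \<Rightarrow> 'a)"
    obtain k g where p: "p = (k,g)" by fastforce
    show "p \<in> inc V eps n h \<longleftrightarrow> p \<in> inc V eps m h'"
      unfolding p using inc_mem[OF assms(1)] inc_mem[OF assms(2)] e by simp
  qed
qed

lemma cval_eq:
  assumes "A \<in> XL_verts V eps" "B \<in> XL_verts V eps"
  shows "A = B \<longleftrightarrow> cval A = cval B"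
proof -
  obtain n h where A: "h \<in> XLn_verts V eps n" "A = inc V eps n h" using assms(1) XL_verts_iff by blast
  obtain m h' where B: "h' \<in> XLn_verts V eps m" "B = inc V eps m h'" using assms(2) XL_verts_iff by blast
  show ?thesis using inc_eq[OF A(1) B(1)] cval_inc[OF A(1)] cval_inc[OF B(1)] A(2) B(2) by simp
qed

lemma cval_prop:
  assumes "A \<in> XL_verts V eps"
  shows "cval A s \<in> V \<and> eps (cval A s) = s mod 2"
proof -
  obtain n h where A: "h \<in> XLn_verts V eps n" "A = inc V eps n h" using assms XL_verts_iff by blast
  have "h (Rn n s) \<in> V \<and> eps (h (Rn n s)) = Rn n s mod 2" using A(1) Rn_in[of n s] by (simp add: W_iff)
  then show ?thesis using cval_inc[OF A(1)] A(2) Rn_mod by simp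
qed

lemma restrict_W:
  assumes "A \<in> XL_verts V eps"
  shows "restrict (cval A) (Iv k) \<in> XLn_verts V eps k"
  using cval_prop[OF assms] by (simp add: W_iff)

lemma cval_inc_restrict:
  assumes "A \<in> XL_verts V eps"
  shows "cval (inc V eps k (restrict (cval A) (Iv k))) = cval A \<circ> Rn k"
  using cval_inc[OF restrict_W[OF assms]] Rn_in by (auto simp: fun_eq_iff)

lemma inc_restrict_XL:
  assumes "A \<in> XL_verts V eps"
  shows "inc V eps k (restrict (cval A) (Iv k)) \<in> XL_verts V eps"
  using restrict_W[OF assms] XL_verts_iff by blast

lemma inc_restrict_self:
  assumes A: "h \<in> XLn_verts V eps n" "A = inc V eps n h" and k: "n \<le> k"
  shows "inc V eps k (restrict (cval A) (Iv k)) = A"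
proof -
  have AX: "A \<in> XL_verts V eps" using A XL_verts_iff by blast
  have "cval A \<circ> Rn k = cval A" using cval_inc[OF A(1)] A(2) Rn_Rn[OF k] by (auto simp: fun_eq_iff)
  then show ?thesis
    using cval_eq[OF inc_restrict_XL[OF AX] AX] cval_inc_restrict[OF AX] by simp
qed

lemma edges_iff:
  "(A,B) \<in> XL_edges V E eps \<longleftrightarrow> A \<in> XL_verts V eps \<and> B \<in> XL_verts V eps \<and>
      (\<forall>s t. \<bar>s - t\<bar> = 1 \<longrightarrow> (cval A s, cval B t) \<in> E)"
proof
  assume "(A,B) \<in> XL_edges V E eps"
  then have AX: "A \<in> XL_verts V eps" and BX: "B \<in> XL_verts V eps" and
    "\<exists>n h h'. (n,h) \<in> A \<and> (n,h') \<in> B \<and> (h,h') \<in> XLn_edges V E eps n"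
    by (auto simp: XL_edges_def)
  then obtain n h h' where hh: "(n,h) \<in> A" "(n,h') \<in> B" "(h,h') \<in> XLn_edges V E eps n" by blast
  obtain m1 g1 where A: "g1 \<in> XLn_verts V eps m1" "A = inc V eps m1 g1" using AX XL_verts_iff by blast
  obtain m2 g2 where B: "g2 \<in> XLn_verts V eps m2" "B = inc V eps m2 g2" using BX XL_verts_iff by blast
  have cA: "cval A = h \<circ> Rn n" using hh(1) A inc_mem[OF A(1)] cval_inc[OF A(1)] by simp
  have cB: "cval B = h' \<circ> Rn n" using hh(2) B inc_mem[OF B(1)] cval_inc[OF B(1)] by simp
  have ed: "\<forall>(s,t)\<in>L_edges (- int n) (int n + 1). (h s, h' t) \<in> E"
    using hh(3) by (simp add: XLn_edges_def hom_edges_def)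
  have "(cval A s, cval B t) \<in> E" if st: "\<bar>s - t\<bar> = 1" for s t
  proof -
    have "(Rn n s, Rn n t) \<in> L_edges (- int n) (int n + 1)"
      using Rn_in[of n s] Rn_in[of n t] Rn_adj[OF st, of n] by (simp add: L_edges_def L_verts_def)
    then show ?thesis using ed cA cB by auto
  qed
  then show "A \<in> XL_verts V eps \<and> B \<in> XL_verts V eps \<and> (\<forall>s t. \<bar>s - t\<bar> = 1 \<longrightarrow> (cval A s, cval B t) \<in> E)"
    using AX BX by blast
next
  assume r: "A \<in> XL_verts V eps \<and> B \<in> XL_verts V eps \<and> (\<forall>s t. \<bar>s - t\<bar> = 1 \<longrightarrow> (cval A s, cval B t) \<in> E)"
  then have AX: "A \<in> XL_verts V eps" and BX: "B \<in> XL_verts V eps" by auto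
  obtain m1 g1 where A: "g1 \<in> XLn_verts V eps m1" "A = inc V eps m1 g1" using AX XL_verts_iff by blast
  obtain m2 g2 where B: "g2 \<in> XLn_verts V eps m2" "B = inc V eps m2 g2" using BX XL_verts_iff by blast
  define k where "k = max m1 m2"
  have k: "m1 \<le> k" "m2 \<le> k" by (auto simp: k_def)
  define a where "a = restrict (cval A) (Iv k)"
  define b where "b = restrict (cval B) (Iv k)"
  have aW: "a \<in> XLn_verts V eps k" unfolding a_def by (rule restrict_W[OF AX])
  have bW: "b \<in> XLn_verts V eps k" unfolding b_def by (rule restrict_W[OF BX])
  have "(k,a) \<in> inc V eps k a" using inc_mem[OF aW] aW by simp
  then have aA: "(k,a) \<in> A" using inc_restrict_self[OF A k(1)] unfolding a_def by simp
  have "(k,b) \<in> inc V eps k b" using inc_mem[OF bW] bW by simp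
  then have bB: "(k,b) \<in> B" using inc_restrict_self[OF B k(2)] unfolding b_def by simp
  have "(a,b) \<in> XLn_edges V E eps k"
    unfolding XLn_edges_def hom_edges_def using aW bW r
    by (auto simp: XLn_verts_def L_edges_def a_def b_def L_verts_def)
  then show "(A,B) \<in> XL_edges V E eps"
    unfolding XL_edges_def using AX BX aA bB by blast
qed


definition cN :: "'a set \<Rightarrow> ('a \<Rightarrow> int) \<Rightarrow> nat \<Rightarrow> (nat \<times> (int \<Rightarrow> 'a)) set \<Rightarrow> (nat \<times> (int \<Rightarrow> 'a)) set" where
  "cN V eps N A = inc V eps N (restrict (cval A) (Iv N))"

definition CC where "CC V eps N \<tau> = cN V eps N ` \<tau>"
definition UU where "UU V eps N \<tau> = CC V eps N \<tau> \<union> CC V eps (Suc N) \<tau>"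
definition rho where "rho A = restrict (cval A) (Iv 0)"

lemma XL_incl_inc: "XL_incl V eps h = inc V eps 0 h"
  by (simp add: XL_incl_def inc_def)

lemma Q_iff:
  "\<tau> \<in> cliques (XL_verts V eps) (XL_edges V E eps) \<longleftrightarrow> finite \<tau> \<and> \<tau> \<noteq> {} \<and> \<tau> \<subseteq> XL_verts V eps \<and>
     (\<forall>A\<in>\<tau>. \<forall>B\<in>\<tau>. \<forall>s t. \<bar>s - t\<bar> = 1 \<longrightarrow> (cval A s, cval B t) \<in> E)"
  unfolding cliques_def using edges_iff[of _ _ V E eps] by blast

lemma L01: "L_edges (- int 0) (int 0 + 1) = {(0,1),(1,0)}"
  by (auto simp: L_edges_def)

lemma P_iff:
  "\<sigma> \<in> cliques (XLn_verts V eps 0) (XLn_edges V E eps 0) \<longleftrightarrow> finite \<sigma> \<and> \<sigma> \<noteq> {} \<and> \<sigma> \<subseteq> XLn_verts V eps 0 \<and>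
     (\<forall>h\<in>\<sigma>. \<forall>h'\<in>\<sigma>. (h 0, h' 1) \<in> E \<and> (h 1, h' 0) \<in> E)"
proof -
  have "(h,h') \<in> XLn_edges V E eps 0 \<longleftrightarrow> h \<in> XLn_verts V eps 0 \<and> h' \<in> XLn_verts V eps 0 \<and> (h 0, h' 1) \<in> E \<and> (h 1, h' 0) \<in> E" for h h'
    unfolding XLn_edges_def hom_edges_def L01 XLn_verts_def by auto
  then show ?thesis unfolding cliques_def by blast
qed

lemma restrict_W0:
  assumes "A \<in> XL_verts V eps"
  shows "restrict (cval A) (L_verts 0 1) \<in> XLn_verts V eps 0"
  using restrict_W[OF assms, of 0] by simp

lemma Rn0: "Rn 0 s = 0 \<or> Rn 0 s = 1" using Rn_range[of 0 s] by auto

lemma phi_Q: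
  assumes "\<sigma> \<in> cliques (XLn_verts V eps 0) (XLn_edges V E eps 0)"
  shows "XL_incl V eps ` \<sigma> \<in> cliques (XL_verts V eps) (XL_edges V E eps)"
proof -
  have s: "finite \<sigma>" "\<sigma> \<noteq> {}" "\<sigma> \<subseteq> XLn_verts V eps 0" "\<forall>h\<in>\<sigma>. \<forall>h'\<in>\<sigma>. (h 0, h' 1) \<in> E \<and> (h 1, h' 0) \<in> E"
    using assms unfolding P_iff by blast+
  have adj: "(cval (inc V eps 0 h) s, cval (inc V eps 0 h') t) \<in> E" if "h \<in> \<sigma>" "h' \<in> \<sigma>" "\<bar>s - t\<bar> = 1" for h h' s t
  proof -
    have hW: "h \<in> XLn_verts V eps 0" and h'W: "h' \<in> XLn_verts V eps 0" using that s(3) by blast+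
    have "\<bar>Rn 0 s - Rn 0 t\<bar> = 1" using Rn_adj[OF that(3)] .
    then have "(Rn 0 s = 0 \<and> Rn 0 t = 1) \<or> (Rn 0 s = 1 \<and> Rn 0 t = 0)" using Rn0[of s] Rn0[of t] by auto
    moreover have "(h 0, h' 1) \<in> E" "(h 1, h' 0) \<in> E" using s(4) that(1,2) by blast+
    ultimately have "(h (Rn 0 s), h' (Rn 0 t)) \<in> E" by auto
    then show ?thesis by (simp add: cval_inc[OF hW] cval_inc[OF h'W])
  qed
  have inX: "inc V eps 0 h \<in> XL_verts V eps" if "h \<in> \<sigma>" for h using that s(3) XL_verts_iff by blast
  have all: "\<forall>X\<in>inc V eps 0 ` \<sigma>. \<forall>Y\<in>inc V eps 0 ` \<sigma>. \<forall>s u. \<bar>s - u\<bar> = 1 \<longrightarrow> (cval X s, cval Y u) \<in> E"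
    using adj by blast
  have sub: "inc V eps 0 ` \<sigma> \<subseteq> XL_verts V eps" using inX by blast
  have fin: "finite (inc V eps 0 ` \<sigma>)" using s(1) by simp
  have ne: "inc V eps 0 ` \<sigma> \<noteq> {}" using s(2) by simp
  have eq: "XL_incl V eps ` \<sigma> = inc V eps 0 ` \<sigma>" by (simp add: XL_incl_inc)
  show ?thesis unfolding Q_iff eq by (intro conjI fin ne sub all)
qed

lemma psi_P:
  assumes "\<tau> \<in> cliques (XL_verts V eps) (XL_edges V E eps)"
  shows "rho ` \<tau> \<in> cliques (XLn_verts V eps 0) (XLn_edges V E eps 0)"
proof -
  have t: "finite \<tau>" "\<tau> \<noteq> {}" "\<tau> \<subseteq> XL_verts V eps" "\<forall>A\<in>\<tau>. \<forall>B\<in>\<tau>. \<forall>s t. \<bar>s - t\<bar> = 1 \<longrightarrow> (cval A s, cval B t) \<in> E"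
    using assms unfolding Q_iff by blast+
  have i01: "(0::int) \<in> Iv 0" "(1::int) \<in> Iv 0" by (auto simp: L_verts_def)
  have inW: "rho A \<in> XLn_verts V eps 0" if "A \<in> \<tau>" for A
    unfolding rho_def using restrict_W0[of A V eps] t(3) that by auto
  have ed: "(rho A 0, rho B 1) \<in> E \<and> (rho A 1, rho B 0) \<in> E" if "A \<in> \<tau>" "B \<in> \<tau>" for A B
  proof -
    have "\<forall>s t. \<bar>s - t\<bar> = 1 \<longrightarrow> (cval A s, cval B t) \<in> E" using t(4) that by blast
    then have "(cval A 0, cval B 1) \<in> E" "(cval A 1, cval B 0) \<in> E" by auto
    then show ?thesis using i01 by (simp add: rho_def)
  qed
  have all: "\<forall>h\<in>rho ` \<tau>. \<forall>h'\<in>rho ` \<tau>. (h 0, h' 1) \<in> E \<and> (h 1, h' 0) \<in> E" using ed by blast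
  have sub: "rho ` \<tau> \<subseteq> XLn_verts V eps 0" using inW by blast
  show ?thesis unfolding P_iff using t(1,2) by (intro conjI all sub) auto
qed

lemma psi_phi:
  assumes "\<sigma> \<in> cliques (XLn_verts V eps 0) (XLn_edges V E eps 0)"
  shows "rho ` (XL_incl V eps ` \<sigma>) = \<sigma>"
proof -
  have s: "\<sigma> \<subseteq> XLn_verts V eps 0" using assms unfolding P_iff by blast
  have "rho (XL_incl V eps h) = h" if "h \<in> \<sigma>" for h
  proof (rule extensionalityI)
    have hW: "h \<in> XLn_verts V eps 0" using that s by blast
    show "rho (XL_incl V eps h) \<in> extensional (Iv 0)" by (simp add: rho_def)
    show "h \<in> extensional (Iv 0)" using hW by (simp add: W_iff)
    fix x assume "x \<in> Iv 0"
    then show "rho (XL_incl V eps h) x = h x"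
      using cval_inc[OF hW] Rn_id[of 0 x] by (simp add: rho_def XL_incl_inc L_verts_def)
  qed
  then show ?thesis by (simp add: image_image)
qed

lemma cval_cN:
  assumes "A \<in> XL_verts V eps"
  shows "cval (cN V eps N A) = cval A \<circ> Rn N"
  unfolding cN_def by (rule cval_inc_restrict[OF assms])

lemma CC_Q:
  assumes "\<tau> \<in> cliques (XL_verts V eps) (XL_edges V E eps)"
  shows "CC V eps N \<tau> \<in> cliques (XL_verts V eps) (XL_edges V E eps)"
proof -
  have t: "finite \<tau>" "\<tau> \<noteq> {}" "\<tau> \<subseteq> XL_verts V eps" "\<forall>A\<in>\<tau>. \<forall>B\<in>\<tau>. \<forall>s t. \<bar>s - t\<bar> = 1 \<longrightarrow> (cval A s, cval B t) \<in> E"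
    using assms unfolding Q_iff by blast+
  have adj: "(cval (cN V eps N A) s, cval (cN V eps N B) u) \<in> E" if "A \<in> \<tau>" "B \<in> \<tau>" "\<bar>s - u\<bar> = 1" for A B s u
  proof -
    have AX: "A \<in> XL_verts V eps" using t(3) that(1) by blast
    have BX: "B \<in> XL_verts V eps" using t(3) that(2) by blast
    have "\<forall>s t. \<bar>s - t\<bar> = 1 \<longrightarrow> (cval A s, cval B t) \<in> E" using t(4) that(1,2) by blast
    then have "(cval A (Rn N s), cval B (Rn N u)) \<in> E" using Rn_adj[OF that(3)] by blast
    then show ?thesis by (simp add: cval_cN[OF AX] cval_cN[OF BX])
  qed
  have inX: "cN V eps N A \<in> XL_verts V eps" if "A \<in> \<tau>" for A
    unfolding cN_def using inc_restrict_XL that t(3) by blast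
  have all: "\<forall>X\<in>cN V eps N ` \<tau>. \<forall>Y\<in>cN V eps N ` \<tau>. \<forall>s u. \<bar>s - u\<bar> = 1 \<longrightarrow> (cval X s, cval Y u) \<in> E"
    using adj by blast
  have sub: "cN V eps N ` \<tau> \<subseteq> XL_verts V eps" using inX by blast
  have fin: "finite (cN V eps N ` \<tau>)" using t(1) by simp
  have ne: "cN V eps N ` \<tau> \<noteq> {}" using t(2) by simp
  show ?thesis unfolding Q_iff CC_def by (intro conjI fin ne sub all)
qed

lemma UU_Q:
  assumes "\<tau> \<in> cliques (XL_verts V eps) (XL_edges V E eps)"
  shows "UU V eps N \<tau> \<in> cliques (XL_verts V eps) (XL_edges V E eps)"
proof -
  have t: "finite \<tau>" "\<tau> \<noteq> {}" "\<tau> \<subseteq> XL_verts V eps" "\<forall>A\<in>\<tau>. \<forall>B\<in>\<tau>. \<forall>s t. \<bar>s - t\<bar> = 1 \<longrightarrow> (cval A s, cval B t) \<in> E"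
    using assms unfolding Q_iff by blast+
  have c1: "CC V eps N \<tau> \<in> cliques (XL_verts V eps) (XL_edges V E eps)" by (rule CC_Q[OF assms])
  have c2: "CC V eps (Suc N) \<tau> \<in> cliques (XL_verts V eps) (XL_edges V E eps)" by (rule CC_Q[OF assms])
  have x1: "(cval (cN V eps N A) s, cval (cN V eps (Suc N) B) u) \<in> E" if "A \<in> \<tau>" "B \<in> \<tau>" "\<bar>s - u\<bar> = 1" for A B s u
  proof -
    have AX: "A \<in> XL_verts V eps" using t(3) that(1) by blast
    have BX: "B \<in> XL_verts V eps" using t(3) that(2) by blast
    have "\<forall>s t. \<bar>s - t\<bar> = 1 \<longrightarrow> (cval A s, cval B t) \<in> E" using t(4) that(1,2) by blast
    then have "(cval A (Rn N s), cval B (Rn (Suc N) u)) \<in> E" using Rn_adj2[OF that(3)] by blast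
    then show ?thesis by (simp add: cval_cN[OF AX] cval_cN[OF BX])
  qed
  have x2: "(cval (cN V eps (Suc N) A) s, cval (cN V eps N B) u) \<in> E" if "A \<in> \<tau>" "B \<in> \<tau>" "\<bar>s - u\<bar> = 1" for A B s u
  proof -
    have AX: "A \<in> XL_verts V eps" using t(3) that(1) by blast
    have BX: "B \<in> XL_verts V eps" using t(3) that(2) by blast
    have "\<bar>u - s\<bar> = 1" using that(3) by arith
    from Rn_adj2[OF this, of N] have r: "\<bar>Rn (Suc N) s - Rn N u\<bar> = 1" by arith
    have "\<forall>s t. \<bar>s - t\<bar> = 1 \<longrightarrow> (cval A s, cval B t) \<in> E" using t(4) that(1,2) by blast
    then have "(cval A (Rn (Suc N) s), cval B (Rn N u)) \<in> E" using r by blast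
    then show ?thesis by (simp add: cval_cN[OF AX] cval_cN[OF BX])
  qed
  have c1': "CC V eps N \<tau> \<subseteq> XL_verts V eps" "finite (CC V eps N \<tau>)" "CC V eps N \<tau> \<noteq> {}"
    using c1 unfolding Q_iff by blast+
  have c2': "CC V eps (Suc N) \<tau> \<subseteq> XL_verts V eps" "finite (CC V eps (Suc N) \<tau>)"
    using c2 unfolding Q_iff by blast+
  have a1: "\<forall>X\<in>CC V eps N \<tau>. \<forall>Y\<in>CC V eps N \<tau>. \<forall>s t. \<bar>s - t\<bar> = 1 \<longrightarrow> (cval X s, cval Y t) \<in> E"
    using c1 unfolding Q_iff by blast
  have a2: "\<forall>X\<in>CC V eps (Suc N) \<tau>. \<forall>Y\<in>CC V eps (Suc N) \<tau>. \<forall>s t. \<bar>s - t\<bar> = 1 \<longrightarrow> (cval X s, cval Y t) \<in> E"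
    using c2 unfolding Q_iff by blast
  have a3: "\<forall>X\<in>CC V eps N \<tau>. \<forall>Y\<in>CC V eps (Suc N) \<tau>. \<forall>s t. \<bar>s - t\<bar> = 1 \<longrightarrow> (cval X s, cval Y t) \<in> E"
    using x1 unfolding CC_def by blast
  have a4: "\<forall>X\<in>CC V eps (Suc N) \<tau>. \<forall>Y\<in>CC V eps N \<tau>. \<forall>s t. \<bar>s - t\<bar> = 1 \<longrightarrow> (cval X s, cval Y t) \<in> E"
    using x2 unfolding CC_def by blast
  show ?thesis unfolding Q_iff UU_def
  proof (intro conjI)
    show "\<forall>A\<in>CC V eps N \<tau> \<union> CC V eps (Suc N) \<tau>. \<forall>B\<in>CC V eps N \<tau> \<union> CC V eps (Suc N) \<tau>. \<forall>s t. \<bar>s - t\<bar> = 1 \<longrightarrow> (cval A s, cval B t) \<in> E"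
      using a1 a2 a3 a4 by blast
  qed (use c1' c2' in auto)
qed

lemma CC0:
  assumes "\<tau> \<in> cliques (XL_verts V eps) (XL_edges V E eps)"
  shows "CC V eps 0 \<tau> = XL_incl V eps ` (rho ` \<tau>)"
  unfolding CC_def cN_def rho_def XL_incl_inc image_image ..

lemma CC_eventually:
  assumes S: "S \<in> order_complex (cliques (XL_verts V eps) (XL_edges V E eps)) (\<subseteq>)"
  shows "\<exists>N0. \<forall>N\<ge>N0. \<forall>x\<in>S. CC V eps N x = x"
proof -
  have fS: "finite S" and SQ: "S \<subseteq> cliques (XL_verts V eps) (XL_edges V E eps)"
    using S unfolding order_complex_def by auto
  have fx: "\<forall>x\<in>S. finite x" using SQ unfolding cliques_def by blast
  have fU: "finite (\<Union>S)" using finite_Union[OF fS] fx by blast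
  have UX: "\<Union>S \<subseteq> XL_verts V eps" using SQ unfolding cliques_def by blast
  define st where "st A = (SOME n. \<exists>h. h \<in> XLn_verts V eps n \<and> A = inc V eps n h)" for A
  have st: "\<exists>h. h \<in> XLn_verts V eps (st A) \<and> A = inc V eps (st A) h" if "A \<in> XL_verts V eps" for A
  proof -
    have "\<exists>n h. h \<in> XLn_verts V eps n \<and> A = inc V eps n h" using that XL_verts_iff by blast
    then show ?thesis unfolding st_def by (rule someI_ex)
  qed
  define N0 where "N0 = Max (insert 0 (st ` \<Union>S))"
  have "CC V eps N x = x" if N: "N \<ge> N0" and x: "x \<in> S" for N x
  proof -
    have "cN V eps N A = A" if A: "A \<in> x" for A
    proof -
      have AX: "A \<in> XL_verts V eps" using A x UX by blast
      obtain h where h: "h \<in> XLn_verts V eps (st A)" "A = inc V eps (st A) h" using st[OF AX] by blast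
      have "st A \<in> insert 0 (st ` \<Union>S)" using A x by blast
      moreover have "finite (insert 0 (st ` \<Union>S))" using fU by simp
      ultimately have "st A \<le> N0" unfolding N0_def by (rule Max_ge[rotated])
      then show ?thesis unfolding cN_def using inc_restrict_self[OF h] N by simp
    qed
    then have "cN V eps N ` x = id ` x" by (intro image_cong) auto
    then show ?thesis unfolding CC_def by simp
  qed
  then show ?thesis by blast
qed


lemma RM_comp:
  assumes "finite {x. t x \<noteq> 0}"
  shows "real_map f (real_map g t) = real_map (f \<circ> g) t"
proof
  fix q
  define D where "D = {x. t x \<noteq> 0}"
  have fD: "finite D" using assms by (simp add: D_def)
  have rg: "real_map g t p = sum t {x \<in> D. g x = p}" for p
    unfolding real_map_def D_def by (rule sum.cong) auto
  have "real_map f (real_map g t) q = sum (real_map g t) {p. real_map g t p \<noteq> 0 \<and> f p = q}"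
    by (simp add: real_map_def)
  also have "\<dots> = sum (real_map g t) {p \<in> g ` D. f p = q}"
  proof (rule sum.mono_neutral_left)
    show "finite {p \<in> g ` D. f p = q}" using fD by simp
    show "{p. real_map g t p \<noteq> 0 \<and> f p = q} \<subseteq> {p \<in> g ` D. f p = q}"
    proof
      fix p assume p: "p \<in> {p. real_map g t p \<noteq> 0 \<and> f p = q}"
      then have "{x \<in> D. g x = p} \<noteq> {}" using rg[of p] by force
      then show "p \<in> {p \<in> g ` D. f p = q}" using p by blast
    qed
    show "\<forall>i\<in>{p \<in> g ` D. f p = q} - {p. real_map g t p \<noteq> 0 \<and> f p = q}. real_map g t i = 0" by auto
  qed
  also have "\<dots> = sum (\<lambda>p. sum t {x \<in> D. g x = p}) {p \<in> g ` D. f p = q}"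
    using rg by simp
  also have "\<dots> = sum t {x \<in> D. f (g x) = q}"
  proof -
    have fin: "finite {x \<in> D. f (g x) = q}" using fD by simp
    have "sum t {x \<in> D. f (g x) = q} = sum (\<lambda>p. sum t {x \<in> {x \<in> D. f (g x) = q}. g x = p}) (g ` {x \<in> D. f (g x) = q})"
      by (rule sum.image_gen[OF fin])
    moreover have "g ` {x \<in> D. f (g x) = q} = {p \<in> g ` D. f p = q}" by auto
    moreover have "{x \<in> {x \<in> D. f (g x) = q}. g x = p} = {x \<in> D. g x = p}" if "p \<in> {p \<in> g ` D. f p = q}" for p
      using that by auto
    ultimately show ?thesis by (auto intro!: sum.cong)
  qed
  also have "\<dots> = real_map (f \<circ> g) t q"
    unfolding real_map_def D_def by (rule sum.cong) auto
  finally show "real_map f (real_map g t) q = real_map (f \<circ> g) t q" .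
qed

lemma RM_cong:
  assumes "\<And>x. t x \<noteq> 0 \<Longrightarrow> f x = g x"
  shows "real_map f t = real_map g t"
  unfolding real_map_def fun_eq_iff using assms by (auto intro!: sum.cong)

lemma RM_id:
  assumes "\<And>x. t x \<noteq> 0 \<Longrightarrow> f x = x"
  shows "real_map f t = t"
proof
  fix q
  have "{p. t p \<noteq> 0 \<and> f p = q} = (if t q \<noteq> 0 then {q} else {})" using assms by auto
  then show "real_map f t q = t q" unfolding real_map_def by auto
qed

lemma topspace_poset_real:
  "topspace (poset_real P (\<subseteq>)) = (\<Union>S\<in>order_complex P (\<subseteq>). simplex_pts S)"
  by (simp add: poset_real_def topspace_geom_real)

lemma simplex_fin_supp:
  assumes "t \<in> simplex_pts S" "finite S"
  shows "finite {x. t x \<noteq> 0}"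
proof (rule finite_subset[OF _ assms(2)])
  show "{x. t x \<noteq> 0} \<subseteq> S" using simplex_ptsD(2)[OF assms(1)] by blast
qed

lemma (in pmaps) RM_cont_PH:
  "continuous_map (poset_real P (\<subseteq>)) (poset_real P' (\<subseteq>)) (\<lambda>t. PH \<alpha> \<beta> 0 t)"
proof -
  have "continuous_map (poset_real P (\<subseteq>)) (prod_topology (top_of_set {0..1::real}) (poset_real P (\<subseteq>))) (\<lambda>t. (0, t))"
    unfolding continuous_map_pairwise o_def by (simp add: continuous_map_in_subtopology)
  from continuous_map_compose[OF this PH_cont] show ?thesis by (simp add: o_def)
qed

lemma RM_cont:
  assumes "pmaps P P' \<alpha> \<alpha>"
  shows "continuous_map (poset_real P (\<subseteq>)) (poset_real P' (\<subseteq>)) (real_map \<alpha>)"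
proof (rule continuous_map_eq[OF pmaps.RM_cont_PH[OF assms]])
  fix t assume "t \<in> topspace (poset_real P (\<subseteq>))"
  then obtain S where S: "S \<in> order_complex P (\<subseteq>)" "t \<in> simplex_pts S" by (auto simp: topspace_poset_real)
  then have "finite S" by (simp add: order_complex_def)
  then show "PH \<alpha> \<alpha> 0 t = real_map \<alpha> t" using PH_0[OF S(2)] by simp
qed

lemma flip_cont:
  "continuous_map (prod_topology (top_of_set {0..1::real}) Y) (prod_topology (top_of_set {0..1::real}) Y) (\<lambda>p. (1 - fst p, snd p))"
proof -
  have "continuous_map (prod_topology (top_of_set {0..1::real}) Y) euclideanreal (\<lambda>p. 1 - fst p)"
    by (intro continuous_intros continuous_map_into_fulltopology[OF continuous_map_fst])
  then have "continuous_map (prod_topology (top_of_set {0..1::real}) Y) (top_of_set {0..1}) (\<lambda>p. 1 - fst p)"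
    by (auto simp: continuous_map_in_subtopology)
  then show ?thesis unfolding continuous_map_pairwise o_def by (simp add: continuous_map_snd)
qed


theorem lemma5p1:
  fixes V :: "'a set" and E :: "('a \<times> 'a) set" and eps :: "'a \<Rightarrow> int"
  assumes "is_bigraph V E eps"
  shows "homotopy_equivalence_map
           (poset_real (cliques (XLn_verts V eps 0) (XLn_edges V E eps 0)) (\<subseteq>))
           (poset_real (cliques (XL_verts V eps) (XL_edges V E eps)) (\<subseteq>))
           (real_map (\<lambda>\<sigma>. XL_incl V eps ` \<sigma>))"
proof -
  define P where "P = cliques (XLn_verts V eps 0) (XLn_edges V E eps 0)"
  define Q where "Q = cliques (XL_verts V eps) (XL_edges V E eps)"
  define \<phi> where "\<phi> = (\<lambda>\<sigma>. XL_incl V eps ` \<sigma>)"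
  define \<psi> where "\<psi> = (\<lambda>\<tau>::(nat \<times> (int \<Rightarrow> 'a)) set set. rho ` \<tau>)"
  define X where "X = poset_real P (\<subseteq>)"
  define Y where "Y = poset_real Q (\<subseteq>)"
  have pm_phi: "pmaps P Q \<phi> \<phi>"
    by unfold_locales (auto simp: P_def Q_def \<phi>_def phi_Q)
  have pm_psi: "pmaps Q P \<psi> \<psi>"
    by unfold_locales (auto simp: P_def Q_def \<psi>_def psi_P)
  have pm1: "pmaps Q Q (CC V eps N) (UU V eps N)" for N
  proof unfold_locales
    fix x :: "(nat \<times> (int \<Rightarrow> 'a)) set set" assume "x \<in> Q"
    then show "CC V eps N x \<in> Q" "UU V eps N x \<in> Q" unfolding Q_def by (rule CC_Q, rule UU_Q)
    show "CC V eps N x \<subseteq> UU V eps N x" by (simp add: UU_def)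
  next
    fix x y :: "(nat \<times> (int \<Rightarrow> 'a)) set set" assume "x \<subseteq> y"
    then show "CC V eps N x \<subseteq> CC V eps N y" "UU V eps N x \<subseteq> UU V eps N y" by (auto simp: CC_def UU_def)
  qed
  have pm2: "pmaps Q Q (CC V eps (Suc N)) (UU V eps N)" for N
  proof unfold_locales
    fix x :: "(nat \<times> (int \<Rightarrow> 'a)) set set" assume "x \<in> Q"
    then show "CC V eps (Suc N) x \<in> Q" "UU V eps N x \<in> Q" unfolding Q_def by (rule CC_Q, rule UU_Q)
    show "CC V eps (Suc N) x \<subseteq> UU V eps N x" by (simp add: UU_def)
  next
    fix x y :: "(nat \<times> (int \<Rightarrow> 'a)) set set" assume "x \<subseteq> y"
    then show "CC V eps (Suc N) x \<subseteq> CC V eps (Suc N) y" "UU V eps N x \<subseteq> UU V eps N y" by (auto simp: CC_def UU_def)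
  qed
  have cF: "continuous_map X Y (real_map \<phi>)"
    unfolding X_def Y_def by (rule RM_cont[OF pm_phi])
  have cG: "continuous_map Y X (real_map \<psi>)"
    unfolding X_def Y_def by (rule RM_cont[OF pm_psi])
  have GF: "homotopic_with (\<lambda>x. True) X X (real_map \<psi> \<circ> real_map \<phi>) id"
  proof (rule homotopic_with_equal)
    show "continuous_map X X (real_map \<psi> \<circ> real_map \<phi>)" by (rule continuous_map_compose[OF cF cG])
    fix t assume "t \<in> topspace X"
    then obtain S where S: "S \<in> order_complex P (\<subseteq>)" "t \<in> simplex_pts S" by (auto simp: X_def topspace_poset_real)
    have fS: "finite S" and SP: "S \<subseteq> P" using S(1) by (auto simp: order_complex_def)
    have "real_map \<psi> (real_map \<phi> t) = real_map (\<psi> \<circ> \<phi>) t"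
      by (rule RM_comp[OF simplex_fin_supp[OF S(2) fS]])
    also have "\<dots> = t"
    proof (rule RM_id)
      fix x assume "t x \<noteq> 0"
      then have "x \<in> P" using simplex_ptsD(2)[OF S(2)] SP by blast
      then show "(\<psi> \<circ> \<phi>) x = x" using psi_phi[of x V eps E] by (simp add: \<psi>_def \<phi>_def P_def)
    qed
    finally show "(real_map \<psi> \<circ> real_map \<phi>) t = id t" by simp
  qed auto
  define h where "h k = (\<lambda>p. if even k then PH (CC V eps (k div 2)) (UU V eps (k div 2)) (fst p) (snd p)
      else PH (CC V eps (Suc (k div 2))) (UU V eps (k div 2)) (1 - fst p) (snd p))" for k
  have hc: "continuous_map (prod_topology (top_of_set {0..1::real}) (geom_real (order_complex Q (\<subseteq>)))) (geom_real (order_complex Q (\<subseteq>))) (h k)" for k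
  proof (cases "even k")
    case True
    then have "h k = (\<lambda>p. PH (CC V eps (k div 2)) (UU V eps (k div 2)) (fst p) (snd p))" by (simp add: h_def)
    then show ?thesis using pmaps.PH_cont[OF pm1] by (simp add: poset_real_def)
  next
    case False
    then have "h k = (\<lambda>p. PH (CC V eps (Suc (k div 2))) (UU V eps (k div 2)) (fst p) (snd p)) \<circ> (\<lambda>p. (1 - fst p, snd p))"
      by (simp add: h_def o_def)
    then show ?thesis using continuous_map_compose[OF flip_cont pmaps.PH_cont[OF pm2]] by (simp add: poset_real_def)
  qed
  have hb: "h k (1,t) = h (Suc k) (0,t)" if t: "t \<in> topspace (geom_real (order_complex Q (\<subseteq>)))" for k t
  proof -
    obtain S where S: "S \<in> order_complex Q (\<subseteq>)" "t \<in> simplex_pts S" using t by (auto simp: topspace_geom_real)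
    have fS: "finite S" using S(1) by (auto simp: order_complex_def)
    show ?thesis
    proof (cases "even k")
      case True
      then have "Suc k div 2 = k div 2" and "\<not> even (Suc k)" by auto
      then show ?thesis using True by (simp add: h_def PH_1[OF S(2) fS])
    next
      case False
      then have "Suc k div 2 = Suc (k div 2)" and "even (Suc k)" by auto
      then show ?thesis using False by (simp add: h_def PH_0[OF S(2) fS])
    qed
  qed
  have ht: "\<exists>k0. \<forall>k\<ge>k0. \<forall>l\<in>{0..1}. \<forall>t\<in>simplex_pts S. h k (l,t) = t" if S: "S \<in> order_complex Q (\<subseteq>)" for S
  proof -
    have fS: "finite S" using S by (auto simp: order_complex_def)
    obtain N0 where N0: "\<forall>N\<ge>N0. \<forall>x\<in>S. CC V eps N x = x" using CC_eventually[of S V eps E] S by (auto simp: Q_def)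
    have "h k (l,t) = t" if k: "k \<ge> 2 * N0" and t: "t \<in> simplex_pts S" for k l t
    proof -
      have k2: "k div 2 \<ge> N0" using k by auto
      have c1: "\<And>x. x \<in> S \<Longrightarrow> CC V eps (k div 2) x = x" using N0 k2 by blast
      have c2: "\<And>x. x \<in> S \<Longrightarrow> CC V eps (Suc (k div 2)) x = x" using N0 k2 by auto
      have u: "\<And>x. x \<in> S \<Longrightarrow> UU V eps (k div 2) x = x" using c1 c2 by (simp add: UU_def)
      show ?thesis unfolding h_def using PH_id[OF t fS c1 u] PH_id[OF t fS c2 u] by simp
    qed
    then show ?thesis by blast
  qed
  have H: "homotopic_with (\<lambda>_. True) (geom_real (order_complex Q (\<subseteq>))) (geom_real (order_complex Q (\<subseteq>))) (\<lambda>t. h 0 (0,t)) id"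
    by (rule infinite_concat[OF hc hb ht])
  have FG: "homotopic_with (\<lambda>x. True) Y Y (real_map \<phi> \<circ> real_map \<psi>) id"
  proof (rule homotopic_with_eq[OF H[folded poset_real_def Y_def]])
    fix t assume "t \<in> topspace Y"
    then obtain S where S: "S \<in> order_complex Q (\<subseteq>)" "t \<in> simplex_pts S" by (auto simp: Y_def topspace_poset_real)
    have fS: "finite S" and SQ: "S \<subseteq> Q" using S(1) by (auto simp: order_complex_def)
    have "(real_map \<phi> \<circ> real_map \<psi>) t = real_map (\<phi> \<circ> \<psi>) t"
      using RM_comp[OF simplex_fin_supp[OF S(2) fS]] by simp
    also have "\<dots> = real_map (CC V eps 0) t"
    proof (rule RM_cong)
      fix x assume "t x \<noteq> 0"
      then have "x \<in> Q" using simplex_ptsD(2)[OF S(2)] SQ by blast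
      then show "(\<phi> \<circ> \<psi>) x = CC V eps 0 x" using CC0[of x V eps E] by (simp add: \<psi>_def \<phi>_def Q_def)
    qed
    also have "\<dots> = h 0 (0,t)" by (simp add: h_def PH_0[OF S(2) fS])
    finally show "(real_map \<phi> \<circ> real_map \<psi>) t = h 0 (0,t)" .
  qed auto
  show ?thesis
    unfolding homotopy_equivalence_map_def
    using cF cG GF FG by (auto simp: X_def Y_def P_def Q_def \<phi>_def)
qed


end
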